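(* Fix $n$. There exists a function $u^n:\mathbb{R}^+\setminus\{0\}\to\mathbb{R}^+\cup\{\infty\}$ with $\lim_{x\to\infty}u^n(x)=0$, independent of the choice of $z$, $\pi$ and $\rho$, such that for every $z=\{z_0,\dots,z_n\}$ with pairwise distinct coordinates and $\alpha=\min_{i\neq j}|z_i-z_j|$, every $\rho>0$, every $k\in\{1,\dots,n\}$ and every $\pi\in\mathcal{P}^k_z$, $$\left|\mathbb{P}_0[\mathcal{T}_\pi<\mathcal{T}_0]-\frac{C(\pi)}{\rho^{k-1}\gamma_0}F(\pi)\right|\le u^n(\alpha\rho)\frac{C(\pi)}{\rho^{k-1}\gamma_0}F(\pi).$$
   Context: $\mathcal{P}_z$ is the set of partitions of $z$; $\mathcal{P}^r_z$ those with $n+1-r$ blocks; $\pi_0$ is the partition into singletons. The ARG $\Gamma^{\rho,z}$ is the continuous-time Markov chain on $\mathcal{P}_z$ in which each pair of blocks merges at rate $1$ and each block $\{z_{i_1}<\dots<z_{i_k}\}$ splits into $\{z_{i_1},\dots,z_{i_j}\}$ and $\{z_{i_{j+1}},\dots,z_{i_k}\}$ at rate $\rho(z_{i_{j+1}}-z_{i_j})$. $\mathbb{P}_0$ is its law started at $\pi_0$; $t^+_0=\inf\{t>0:\Gamma^{\rho,z}_t\ne\pi_0\}$, $\mathcal{T}_0=\inf\{t>t_0^+:\Gamma^{\rho,z}_t=\pi_0\}$, $\mathcal{T}_\pi=\inf\{t>0:\Gamma^{\rho,z}_t=\pi\}$. $\gamma_0=\frac{n(n+1)}{2}$. The cover length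 of $\pi$ with blocks $b_i$ is $C(\pi)=\sum_i\max_{x,y\in b_i}|x-y|$. A coalescence scenario of order $r$ is a sequence $(s_k)_{0\le k\le r}$ with $s_0=\pi_0$ and each $s_k$ obtained from $s_{k-1}$ by merging two blocks; $\mathcal{S}(\pi)$ is the set of such scenarios ending at $s_r=\pi$; its energy is $E(s)=\prod_{i=1}^rC(s_i)$; and $F(\pi)=\sum_{s\in\mathcal{S}(\pi)}1/E(s)$. *)

theory Defs
  imports Complex_Main "HOL-Library.Disjoint_Sets" "HOL-Library.Extended_Nonnegative_Real"
begin

text \<open>The point set z = {z_0,...,z_n} is a finite set of reals (so coordinates are
pairwise distinct). Partitions of z are sets of blocks.\<close>

definition partitions_of :: "real set \<Rightarrow> real set set set" where
  "partitions_of z = {P. partition_on z P}"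

definition partitions_r :: "real set \<Rightarrow> nat \<Rightarrow> real set set set" where
  "partitions_r z r = {P \<in> partitions_of z. card P + r = card z}"

definition pi0 :: "real set \<Rightarrow> real set set" where
  "pi0 z = (\<lambda>x. {x}) ` z"

definition gamma0 :: "nat \<Rightarrow> real" where
  "gamma0 n = real n * (real n + 1) / 2"

definition min_dist :: "real set \<Rightarrow> real" where
  "min_dist z = Min {\<bar>x - y\<bar> | x y. x \<in> z \<and> y \<in> z \<and> x \<noteq> y}"

definition cover_length :: "real set set \<Rightarrow> real" where
  "cover_length P = (\<Sum>b\<in>P. Max {\<bar>x - y\<bar> | x y. x \<in> b \<and> y \<in> b})"

definition merge_blocks :: "real set set \<Rightarrow> real set \<Rightarrow> real set \<Rightarrow> real set set" where
  "merge_blocks P b1 b2 = insert (b1 \<union> b2) (P - {b1, b2})"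

definition split_block :: "real set set \<Rightarrow> real set \<Rightarrow> real \<Rightarrow> real \<Rightarrow> real set set" where
  "split_block P b x y = insert {w \<in> b. w \<le> x} (insert {w \<in> b. y \<le> w} (P - {b}))"

definition is_merge :: "real set set \<Rightarrow> real set set \<Rightarrow> bool" where
  "is_merge P Q \<longleftrightarrow> (\<exists>b1\<in>P. \<exists>b2\<in>P. b1 \<noteq> b2 \<and> Q = merge_blocks P b1 b2)"

definition merge_events :: "real set set \<Rightarrow> real set set \<Rightarrow> real set set set" where
  "merge_events P Q = {{b1, b2} | b1 b2. b1 \<in> P \<and> b2 \<in> P \<and> b1 \<noteq> b2 \<and> Q = merge_blocks P b1 b2}"

definition split_events :: "real set set \<Rightarrow> real set set \<Rightarrow> (real set \<times> real \<times> real) set" where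
  "split_events P Q = {(b, x, y). b \<in> P \<and> x \<in> b \<and> y \<in> b \<and> x < y \<and>
      \<not> (\<exists>w\<in>b. x < w \<and> w < y) \<and> Q = split_block P b x y}"

definition arg_rate :: "real \<Rightarrow> real set set \<Rightarrow> real set set \<Rightarrow> real" where
  "arg_rate \<rho> P Q = real (card (merge_events P Q)) +
      (\<Sum>(b, x, y)\<in>split_events P Q. \<rho> * (y - x))"

definition arg_total_rate :: "real set \<Rightarrow> real \<Rightarrow> real set set \<Rightarrow> real" where
  "arg_total_rate z \<rho> P = (\<Sum>Q\<in>partitions_of z - {P}. arg_rate \<rho> P Q)"

definition arg_jump :: "real set \<Rightarrow> real \<Rightarrow> real set set \<Rightarrow> real set set \<Rightarrow> real" where
  "arg_jump z \<rho> P Q = (if Q = P then 0 else arg_rate \<rho> P Q / arg_total_rate z \<rho> P)"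

fun path_prob :: "('a \<Rightarrow> 'a \<Rightarrow> real) \<Rightarrow> 'a list \<Rightarrow> real" where
  "path_prob p (x # y # ys) = p x y * path_prob p (y # ys)"
| "path_prob p _ = 1"

text \<open>Probability that a discrete jump chain with transition probabilities p on state
space S, started at a, visits b (at a time \<ge> 1) before returning to a: the sum over all
finite paths a, x_1, ..., x_m, b with intermediate states outside {a, b}.\<close>
definition hit_before_return :: "'a set \<Rightarrow> ('a \<Rightarrow> 'a \<Rightarrow> real) \<Rightarrow> 'a \<Rightarrow> 'a \<Rightarrow> real" where
  "hit_before_return S p a b =
     (\<Sum>m. \<Sum>xs\<in>{xs. length xs = m \<and> set xs \<subseteq> S - {a, b}}. path_prob p (a # xs @ [b]))"

text \<open>P_0[T_pi < T_0] for the ARG: since the chain is a finite-state continuous-time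
Markov chain, this event is the event that its jump chain, started at pi0, visits pi
before returning to pi0.\<close>
definition arg_hit_prob :: "real set \<Rightarrow> real \<Rightarrow> real set set \<Rightarrow> real" where
  "arg_hit_prob z \<rho> P = hit_before_return (partitions_of z) (arg_jump z \<rho>) (pi0 z) P"

definition scenarios :: "real set \<Rightarrow> real set set \<Rightarrow> real set set list set" where
  "scenarios z P = {s. s \<noteq> [] \<and> hd s = pi0 z \<and> last s = P \<and>
      (\<forall>i. Suc i < length s \<longrightarrow> is_merge (s ! i) (s ! Suc i))}"

definition energy :: "real set set list \<Rightarrow> real" where
  "energy s = (\<Prod>i\<in>{1..<length s}. cover_length (s ! i))"

definition F_fun :: "real set \<Rightarrow> real set set \<Rightarrow> real" where
  "F_fun z P = (\<Sum>s\<in>scenarios z P. 1 / energy s)"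

end

theory Submission
  imports Defs
begin
definition dm :: "real set \<Rightarrow> real" where
  "dm c = Max c - Min c"

function psi :: "real set \<Rightarrow> real" where
  "psi c = (if card c \<le> 1 then 1 else
     Max ((\<lambda>x. psi {w\<in>c. w \<le> x} * psi {w\<in>c. x < w} / dm c) ` (c - {Max c})))"
  by auto
termination
proof (relation "measure card")
  show "wf (measure card)" by simp
next
  fix c x
  assume a: "\<not> card c \<le> 1" "x \<in> c - {Max c}"
  then have fin: "finite c" using card.infinite by fastforce
  have "Max c \<in> c" using a fin by (metis Diff_iff Max_in empty_iff)
  moreover have "Max c \<notin> {w\<in>c. w \<le> x}" using a fin by (auto simp: Max_ge antisym)
  ultimately show "({w\<in>c. w \<le> x}, c) \<in> measure card"
    using fin by (auto intro!: psubset_card_mono)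
next
  fix c x
  assume a: "\<not> card c \<le> 1" "x \<in> c - {Max c}"
  then have fin: "finite c" using card.infinite by fastforce
  have "x \<notin> {w\<in>c. x < w}" by auto
  then show "({w\<in>c. x < w}, c) \<in> measure card"
    using fin a by (auto intro!: psubset_card_mono)
qed

declare psi.simps[simp del]

lemma dm_nonneg: "finite c \<Longrightarrow> c \<noteq> {} \<Longrightarrow> 0 \<le> dm c"
  unfolding dm_def by (simp add: Max_ge Min_le_iff Min_in)

lemma card2_ex: "finite c \<Longrightarrow> 2 \<le> card c \<Longrightarrow> \<exists>x\<in>c. x < Max c"
proof -
  assume f: "finite c" and c2: "2 \<le> card c"
  then have "c \<noteq> {}" by auto
  have "\<not> c \<subseteq> {Max c}"
  proof
    assume "c \<subseteq> {Max c}"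
    then have "card c \<le> card {Max c}" by (intro card_mono) auto
    then have "card c \<le> 1" by simp
    with c2 show False by simp
  qed
  then obtain x where "x \<in> c" "x \<noteq> Max c" by auto
  moreover have "x \<le> Max c" using f \<open>x \<in> c\<close> by simp
  ultimately show ?thesis by force
qed

lemma card2I: "finite S \<Longrightarrow> x \<in> S \<Longrightarrow> y \<in> S \<Longrightarrow> x \<noteq> y \<Longrightarrow> 2 \<le> card S"
proof -
  assume a: "finite S" "x \<in> S" "y \<in> S" "x \<noteq> y"
  then have "card {x, y} \<le> card S" by (intro card_mono) auto
  then show ?thesis using a by simp
qed

lemma dm_pos: "finite c \<Longrightarrow> 2 \<le> card c \<Longrightarrow> 0 < dm c"
proof -
  assume f: "finite c" and c2: "2 \<le> card c"
  then obtain x where x: "x \<in> c" "x < Max c" using card2_ex by blast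
  then have "Min c \<le> x" using f by simp
  then show ?thesis using x unfolding dm_def by simp
qed

lemma dm_mono: "finite c \<Longrightarrow> A \<subseteq> c \<Longrightarrow> A \<noteq> {} \<Longrightarrow> dm A \<le> dm c"
proof -
  assume f: "finite c" and s: "A \<subseteq> c" and ne: "A \<noteq> {}"
  have fA: "finite A" using f s finite_subset by auto
  have "Max A \<le> Max c" using Max_mono[OF s ne f] .
  moreover have "Min c \<le> Min A" using Min_antimono[OF s ne f] .
  ultimately show ?thesis unfolding dm_def by simp
qed

lemma psi_le1: "card c \<le> 1 \<Longrightarrow> psi c = 1"
  by (simp add: psi.simps)

lemma psi_split_le:
  assumes f: "finite c" and x: "x \<in> c" "x < Max c"
  shows "psi {w\<in>c. w \<le> x} * psi {w\<in>c. x < w} / dm c \<le> psi c"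
proof -
  have "Max c \<in> c" using f x by (intro Max_in) auto
  then have "{x, Max c} \<subseteq> c" using x by auto
  then have "card {x, Max c} \<le> card c" using f card_mono by blast
  then have "\<not> card c \<le> 1" using x by auto
  then have "psi c = Max ((\<lambda>x. psi {w\<in>c. w \<le> x} * psi {w\<in>c. x < w} / dm c) ` (c - {Max c}))"
    by (simp add: psi.simps)
  moreover have "x \<in> c - {Max c}" using x by auto
  ultimately show ?thesis using f by (simp only:) (rule Max_ge, auto)
qed

lemma psi_split_ex:
  assumes f: "finite c" and c2: "2 \<le> card c"
  shows "\<exists>x\<in>c. x < Max c \<and> psi c = psi {w\<in>c. w \<le> x} * psi {w\<in>c. x < w} / dm c"
proof -
  have "\<not> card c \<le> 1" using c2 by simp
  then have eq: "psi c = Max ((\<lambda>x. psi {w\<in>c. w \<le> x} * psi {w\<in>c. x < w} / dm c) ` (c - {Max c}))"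
    by (simp add: psi.simps)
  obtain y where "y \<in> c" "y < Max c" using card2_ex[OF f c2] by blast
  then have ne: "c - {Max c} \<noteq> {}" by auto
  have "psi c \<in> (\<lambda>x. psi {w\<in>c. w \<le> x} * psi {w\<in>c. x < w} / dm c) ` (c - {Max c})"
    unfolding eq using f ne by (intro Max_in) auto
  then obtain x where x: "x \<in> c - {Max c}" "psi c = psi {w\<in>c. w \<le> x} * psi {w\<in>c. x < w} / dm c"
    by auto
  have "x \<le> Max c" using x f by simp
  then have "x < Max c" using x by force
  then show ?thesis using x by auto
qed

lemma psi_pos: "finite c \<Longrightarrow> 0 < psi c"
proof (induction "card c" arbitrary: c rule: less_induct)
  case less
  show ?case
  proof (cases "card c \<le> 1")
    case True
    then show ?thesis by (simp add: psi_le1)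
  next
    case False
    then obtain x where x: "x \<in> c" "x < Max c"
      and eq: "psi c = psi {w\<in>c. w \<le> x} * psi {w\<in>c. x < w} / dm c"
      using psi_split_ex[OF less.prems] by force
    have "Max c \<in> c" using less.prems x by (intro Max_in) auto
    moreover have "Max c \<notin> {w\<in>c. w \<le> x}" using x by auto
    ultimately have l1: "card {w\<in>c. w \<le> x} < card c"
      using less.prems by (intro psubset_card_mono) auto
    have l2: "card {w\<in>c. x < w} < card c"
      using less.prems x by (intro psubset_card_mono) auto
    have "0 < psi {w\<in>c. w \<le> x}" using less.hyps[OF l1] less.prems by simp
    moreover have "0 < psi {w\<in>c. x < w}" using less.hyps[OF l2] less.prems by simp
    moreover have "0 < dm c" using dm_pos less.prems False by simp
    ultimately show ?thesis using eq by simp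
  qed
qed

lemma psi_cut:
  assumes "finite c" and "{w\<in>c. w \<le> a} \<noteq> {}" and "{w\<in>c. a < w} \<noteq> {}"
  shows "psi c \<le> psi {w\<in>c. w \<le> a} * psi {w\<in>c. a < w} / (Min {w\<in>c. a < w} - Max {w\<in>c. w \<le> a})"
  using assms
proof (induction "card c" arbitrary: c a rule: less_induct)
  case less
  define A where "A = {w\<in>c. w \<le> a}"
  define B where "B = {w\<in>c. a < w}"
  have f: "finite c" using less.prems by simp
  have fA: "finite A" "A \<noteq> {}" using less.prems f unfolding A_def by auto
  have fB: "finite B" "B \<noteq> {}" using less.prems f unfolding B_def by auto
  have Asub: "A \<subseteq> c" "B \<subseteq> c" unfolding A_def B_def by auto
  have MA: "Max A \<in> A" "Max A \<le> a" using fA Max_in unfolding A_def by auto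
  have mB: "Min B \<in> B" "a < Min B" using fB Min_in unfolding B_def by auto
  define lam where "lam = Min B - Max A"
  have lam: "0 < lam" using MA mB unfolding lam_def by simp
  have c2: "2 \<le> card c"
  proof -
    have "{Max A, Min B} \<subseteq> c" using MA mB unfolding A_def B_def by auto
    moreover have "card {Max A, Min B} = 2" using MA mB by auto
    ultimately show ?thesis using f by (metis card_mono)
  qed
  have Mc: "Max c = Max B"
  proof -
    have "Max c \<in> c" using f fA A_def by (intro Max_in) auto
    moreover have "Min B \<le> Max c" using mB f B_def by auto
    ultimately have "Max c \<in> B" using mB by (auto simp: B_def)
    then show ?thesis using f fB B_def by (intro antisym) (auto intro: Max_mono)
  qed
  have mc: "Min c = Min A"
  proof -
    have "Min c \<in> c" using f fA A_def by (intro Min_in) auto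
    moreover have "Min c \<le> Max A" using MA f A_def by auto
    ultimately have "Min c \<in> A" using MA by (auto simp: A_def)
    then show ?thesis using f fA A_def by (intro antisym) (auto intro: Min_antimono)
  qed
  have dmc: "lam \<le> dm c" unfolding dm_def lam_def Mc mc using fA fB MA mB
    by (smt (verit, best) Max_ge Min_le)
  have dmcpos: "0 < dm c" using lam dmc by simp
  obtain x where x: "x \<in> c" "x < Max c"
    and eq: "psi c = psi {w\<in>c. w \<le> x} * psi {w\<in>c. x < w} / dm c"
    using psi_split_ex[OF f c2] by blast
  define L where "L = {w\<in>c. w \<le> x}"
  define U where "U = {w\<in>c. x < w}"
  have pos: "\<And>S. S \<subseteq> c \<Longrightarrow> 0 < psi S" using f by (meson finite_subset psi_pos)
  consider "x = Max A" | "x < Max A" | "Max A < x" by linarith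
  then show ?case
  proof cases
    case 1
    have iff: "\<And>w. w \<in> c \<Longrightarrow> w \<le> Max A \<longleftrightarrow> w \<le> a"
    proof -
      fix w assume "w \<in> c"
      then show "w \<le> Max A \<longleftrightarrow> w \<le> a"
        using MA(2) Max_ge[OF fA(1), of w] unfolding A_def by auto
    qed
    have "L = A" unfolding L_def 1 using iff by (auto simp: A_def)
    moreover have "U = B" unfolding U_def 1 using iff by (auto simp: B_def not_le[symmetric])
    ultimately have "psi c = psi A * psi B / dm c" using eq L_def U_def by simp
    also have "\<dots> \<le> psi A * psi B / lam"
      using lam dmc pos[of A] pos[of B] A_def B_def
      by (intro divide_left_mono) auto
    finally show ?thesis unfolding A_def B_def lam_def by simp
  next
    case 2
    have xA: "x \<in> A" using 2 MA x A_def by auto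
    define A2 where "A2 = {w\<in>A. x < w}"
    have cardU: "card U < card c" unfolding U_def using f x by (intro psubset_card_mono) auto
    have UA: "{w\<in>U. w \<le> a} = A2" unfolding U_def A2_def A_def by auto
    have UB: "{w\<in>U. a < w} = B" unfolding U_def B_def using xA A_def by auto
    have A2ne: "A2 \<noteq> {}" unfolding A2_def using 2 MA by auto
    have "finite U" unfolding U_def using f by simp
    then have IH: "psi U \<le> psi A2 * psi B / (Min B - Max A2)"
      using less.hyps[OF cardU, of a] UA UB A2ne fB by simp
    have MA2: "Max A2 = Max A"
    proof -
      have "Max A \<in> A2" unfolding A2_def using 2 MA by auto
      moreover have "A2 \<subseteq> A" unfolding A2_def by auto
      ultimately show ?thesis using fA A2ne
        by (metis Max_eqI Max_ge finite_subset subsetD)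
    qed
    have LA: "{w\<in>A. w \<le> x} = L" unfolding L_def A_def using xA A_def by auto
    have splitA: "psi L * psi A2 / dm A \<le> psi A"
      using psi_split_le[OF fA(1) xA] 2 LA A2_def by simp
    have dmA: "0 < dm A" "dm A \<le> dm c"
      using dm_mono[OF f Asub(1) fA(2)] apply -
      apply (rule dm_pos[OF fA(1)])
      using xA MA 2 fA by (intro card2I[of A x "Max A"]) auto
    have "psi c = psi L * psi U / dm c" using eq L_def U_def by simp
    also have "\<dots> \<le> psi L * (psi A2 * psi B / lam) / dm c"
      using IH MA2 lam_def pos[of L] dmcpos L_def
      by (intro divide_right_mono mult_left_mono) auto
    also have "\<dots> = (psi L * psi A2) * psi B / (lam * dm c)" by simp
    also have "\<dots> \<le> (psi A * dm A) * psi B / (lam * dm c)"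
      using splitA dmA pos[of B] lam dmcpos B_def
      by (intro divide_right_mono mult_right_mono) (auto simp: field_simps)
    also have "\<dots> \<le> (psi A * dm c) * psi B / (lam * dm c)"
      using dmA pos[of A] pos[of B] lam dmcpos A_def B_def
      by (intro divide_right_mono mult_right_mono mult_left_mono) auto
    also have "\<dots> = psi A * psi B / lam" using dmcpos by simp
    finally show ?thesis unfolding A_def B_def lam_def by simp
  next
    case 3
    have "\<not> x \<le> a"
    proof
      assume "x \<le> a"
      then have "x \<in> A" using x by (auto simp: A_def)
      then have "x \<le> Max A" using fA by simp
      then show False using 3 by simp
    qed
    then have xB: "x \<in> B" using x by (auto simp: B_def)
    have xMB: "x < Max B" using x Mc by simp
    define B1 where "B1 = {w\<in>B. w \<le> x}"
    have "Max c \<in> c" using f x by (intro Max_in) auto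
    moreover have "Max c \<notin> L" using x by (auto simp: L_def)
    ultimately have cardL: "card L < card c" using f by (intro psubset_card_mono) (auto simp: L_def)
    have LA: "{w\<in>L. w \<le> a} = A" unfolding L_def A_def using xB B_def by auto
    have LB: "{w\<in>L. a < w} = B1" unfolding L_def B1_def B_def by auto
    have B1ne: "Min B \<in> B1" unfolding B1_def using mB fB xB by auto
    have "finite L" unfolding L_def using f by simp
    then have IH: "psi L \<le> psi A * psi B1 / (Min B1 - Max A)"
      using less.hyps[OF cardL, of a] LA LB B1ne fA by auto
    have mB1: "Min B1 = Min B"
    proof -
      have "B1 \<subseteq> B" unfolding B1_def by auto
      then show ?thesis using fB B1ne
        by (metis Min_eqI Min_le finite_subset subsetD)
    qed
    have UB: "{w\<in>B. x < w} = U" unfolding U_def B_def using xB B_def by auto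
    have splitB: "psi B1 * psi U / dm B \<le> psi B"
      using psi_split_le[OF fB(1) xB xMB] UB B1_def by simp
    have MB: "Max B \<in> B" using fB by (intro Max_in) auto
    have dmB: "0 < dm B" "dm B \<le> dm c"
      using dm_mono[OF f Asub(2) fB(2)] apply -
      apply (rule dm_pos[OF fB(1)])
      using xB xMB fB MB by (intro card2I[of B x "Max B"]) auto
    have "psi c = psi L * psi U / dm c" using eq L_def U_def by simp
    also have "\<dots> \<le> (psi A * psi B1 / lam) * psi U / dm c"
      using IH mB1 lam_def pos[of U] dmcpos U_def
      by (intro divide_right_mono mult_right_mono) auto
    also have "\<dots> = psi A * (psi B1 * psi U) / (lam * dm c)" by simp
    also have "\<dots> \<le> psi A * (psi B * dm B) / (lam * dm c)"
      using splitB dmB pos[of A] lam dmcpos A_def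
      by (intro divide_right_mono mult_left_mono) (auto simp: field_simps)
    also have "\<dots> \<le> psi A * (psi B * dm c) / (lam * dm c)"
      using dmB pos[of A] pos[of B] lam dmcpos A_def B_def
      by (intro divide_right_mono mult_right_mono mult_left_mono) auto
    also have "\<dots> = psi A * psi B / lam" using dmcpos by simp
    finally show ?thesis unfolding A_def B_def lam_def by simp
  qed
qed

lemma sub_single_card: "S \<subseteq> {a} \<Longrightarrow> card S \<le> 1"
  using card_mono[of "{a}" S] by simp

lemma Max_remove_lt: "finite S \<Longrightarrow> x \<in> S - {Max S} \<Longrightarrow> x < Max S"
proof -
  assume "finite S" "x \<in> S - {Max S}"
  then have "x \<le> Max S" "x \<noteq> Max S" by auto
  then show ?thesis by simp
qed

 lemma Max_remove_succ:
  fixes S :: "real set"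
  assumes f: "finite S" and c2: "2 \<le> card S"
  shows "Min {w\<in>S. Max (S - {Max S}) < w} = Max S"
proof -
  have ne: "S \<noteq> {}" using c2 by auto
  have MS: "Max S \<in> S" using f ne by simp
  have ne': "S - {Max S} \<noteq> {}"
  proof
    assume "S - {Max S} = {}"
    then have "S \<subseteq> {Max S}" by auto
    then have "card S \<le> 1" by (rule sub_single_card)
    then show False using c2 by simp
  qed
  have m': "Max (S - {Max S}) \<in> S - {Max S}" using f ne' by (intro Max_in) auto
  then have lt: "Max (S - {Max S}) < Max S" using f by (rule Max_remove_lt[rotated])
  have "{w\<in>S. Max (S - {Max S}) < w} = {Max S}"
  proof (intro equalityI subsetI)
    fix w assume w: "w \<in> {w\<in>S. Max (S - {Max S}) < w}"
    show "w \<in> {Max S}"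
    proof (rule ccontr)
      assume "w \<notin> {Max S}"
      then have "w \<in> S - {Max S}" using w by auto
      then have "w \<le> Max (S - {Max S})" using f by simp
      moreover have "Max (S - {Max S}) < w" using w by simp
      ultimately show False by linarith
    qed
  next
    fix w assume "w \<in> {Max S}" then show "w \<in> {w\<in>S. Max (S - {Max S}) < w}" using MS lt by auto
  qed
  then show ?thesis by simp
qed

lemma gaps_bound:
  fixes S :: "real set"
  assumes "finite S" "S \<noteq> {}" "\<And>x. x \<in> S \<Longrightarrow> x < Max S \<Longrightarrow> Min {w\<in>S. x < w} - x \<le> G" "0 \<le> G"
  shows "dm S \<le> (real (card S) - 1) * G"
  using assms
proof (induction "card S" arbitrary: S rule: less_induct)
  case less
  note f = less.prems(1) and ne = less.prems(2) and gp = less.prems(3) and G0 = less.prems(4)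
  show ?case
  proof (cases "card S \<le> 1")
    case True
    then have "card S = 1" using f ne by (simp add: Suc_leI card_gt_0_iff le_antisym)
    then obtain a where "S = {a}" using card_1_singletonE by blast
    then show ?thesis by (simp add: dm_def)
  next
    case False
    then have c2: "2 \<le> card S" by simp
    define S' where "S' = S - {Max S}"
    have MS: "Max S \<in> S" using f ne by simp
    have ne': "S' \<noteq> {}"
    proof
      assume "S' = {}"
      then have "S \<subseteq> {Max S}" unfolding S'_def by auto
      then have "card S \<le> 1" by (rule sub_single_card)
      then show False using c2 by simp
    qed
    have fS': "finite S'" using f S'_def by simp
    have cS': "card S' = card S - 1" using MS f unfolding S'_def by simp
    have m': "Max S' \<in> S'" using fS' ne' by simp
    then have lt: "Max S' < Max S" using f unfolding S'_def by (rule Max_remove_lt[rotated])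
    have succ: "Min {w\<in>S. Max S' < w} = Max S" using Max_remove_succ[OF f c2] S'_def by simp
    have g1: "Max S - Max S' \<le> G" using gp[of "Max S'"] m' lt succ S'_def by auto
    have gp': "Min {w\<in>S'. x < w} - x \<le> G" if x: "x \<in> S'" "x < Max S'" for x
    proof -
      have eq: "{w\<in>S'. x < w} = {w\<in>S. x < w} - {Max S}" unfolding S'_def by auto
      have nn: "{w\<in>S'. x < w} \<noteq> {}" using m' x by auto
      have "Min {w\<in>S'. x < w} = Min {w\<in>S. x < w}"
      proof -
        have a: "Min {w\<in>S'. x < w} \<in> {w\<in>S'. x < w}" using fS' nn by (intro Min_in) auto
        have b: "Min {w\<in>S'. x < w} \<le> Max S'" using a fS' by auto
        show ?thesis
        proof (rule Min_eqI[symmetric])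
          show "finite {w\<in>S. x < w}" using f by simp
          show "Min {w\<in>S'. x < w} \<in> {w\<in>S. x < w}" using a S'_def by auto
          fix y assume y: "y \<in> {w\<in>S. x < w}"
          show "Min {w\<in>S'. x < w} \<le> y"
          proof (cases "y = Max S")
            case True then show ?thesis using b lt by simp
          next
            case False then have "y \<in> {w\<in>S'. x < w}" using y S'_def by auto
            then show ?thesis using fS' by simp
          qed
        qed
      qed
      moreover have "x \<in> S" "x < Max S" using x lt S'_def by auto
      ultimately show ?thesis using gp by simp
    qed
    have "card S' < card S" using cS' c2 by simp
    then have IH: "dm S' \<le> (real (card S') - 1) * G" using less.hyps fS' ne' gp' G0 by blast
    have "Min S = Min S'"
    proof -
      have "Min S' \<in> S'" using fS' ne' by simp
      then have "Min S' \<in> S" using S'_def by simp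
      moreover have "\<forall>y\<in>S. Min S' \<le> y"
      proof
        fix y assume "y \<in> S"
        then show "Min S' \<le> y"
        proof (cases "y = Max S")
          case True
          have "Min S' \<le> Max S'" using fS' m' by simp
          then show ?thesis using lt True by simp
        next
          case False then show ?thesis using \<open>y \<in> S\<close> fS' S'_def by simp
        qed
      qed
      ultimately show ?thesis using f by (intro Min_eqI) auto
    qed
    then have "dm S = (Max S - Max S') + dm S'" unfolding dm_def by simp
    also have "\<dots> \<le> G + (real (card S') - 1) * G" using g1 IH by simp
    also have "\<dots> = (real (card S) - 1) * G" using cS' c2 by (simp add: algebra_simps of_nat_diff)
    finally show ?thesis .
  qed
qed

fun EE :: "nat \<Rightarrow> real" where
  "EE 0 = 1"
| "EE (Suc m) = (real (Suc m))\<^sup>2 * (EE m)\<^sup>2"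

lemma EE_ge1: "1 \<le> EE m"
proof (induction m)
  case 0 then show ?case by simp
next
  case (Suc m)
  have a: "1 \<le> (real (Suc m))\<^sup>2" by simp
  have b: "1 \<le> (EE m)\<^sup>2" using Suc by (simp add: one_le_power)
  have "1 * 1 \<le> (real (Suc m))\<^sup>2 * (EE m)\<^sup>2" using a b by (intro mult_mono) auto
  then show ?case by simp
qed

lemma EE_Suc_ge: "EE m \<le> EE (Suc m)"
proof -
  have "EE m \<le> (EE m)\<^sup>2" using EE_ge1[of m] by (simp add: power2_eq_square)
  also have "\<dots> = 1 * (EE m)\<^sup>2" by simp
  also have "\<dots> \<le> (real (Suc m))\<^sup>2 * (EE m)\<^sup>2"
    by (intro mult_right_mono) auto
  finally show ?thesis by simp
qed

lemma EE_mono: "m \<le> m' \<Longrightarrow> EE m \<le> EE m'"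
  by (induction m' rule: dec_induct) (auto intro: order_trans[OF _ EE_Suc_ge] simp del: EE.simps)

lemma EE_nonneg[simp]: "0 \<le> EE m"
  using EE_ge1[of m] by simp

lemma m_le_sq: "real m \<le> (real (Suc m))\<^sup>2"
proof -
  have "m \<le> Suc m * Suc m" by simp
  then have "real m \<le> real (Suc m * Suc m)" by (rule of_nat_mono)
  then show ?thesis by (metis of_nat_mult power2_eq_square)
qed

lemma psi_straddle:
  assumes f: "finite Z" and L: "{w\<in>Z. w \<le> a} \<noteq> {}" and U: "{w\<in>Z. a < w} \<noteq> {}"
    and G: "0 < G" "\<And>w. w \<in> Z \<Longrightarrow> a < w \<Longrightarrow> a + G \<le> w"
  shows "psi Z \<le> psi {w\<in>Z. w \<le> a} * psi {w\<in>Z. a < w} / G"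
proof -
  have fL: "finite {w\<in>Z. w \<le> a}" "finite {w\<in>Z. a < w}" using f by auto
  have "Max {w\<in>Z. w \<le> a} \<in> {w\<in>Z. w \<le> a}" using fL L by (intro Max_in) auto
  then have m: "Max {w\<in>Z. w \<le> a} \<le> a" by simp
  have "Min {w\<in>Z. a < w} \<in> {w\<in>Z. a < w}" using fL U by (intro Min_in) auto
  then have "a + G \<le> Min {w\<in>Z. a < w}" using G by simp
  then have lam: "G \<le> Min {w\<in>Z. a < w} - Max {w\<in>Z. w \<le> a}" using m by simp
  have "psi Z \<le> psi {w\<in>Z. w \<le> a} * psi {w\<in>Z. a < w} / (Min {w\<in>Z. a < w} - Max {w\<in>Z. w \<le> a})"
    using psi_cut[OF f L U] .
  also have "\<dots> \<le> psi {w\<in>Z. w \<le> a} * psi {w\<in>Z. a < w} / G"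
    using lam G psi_pos[OF fL(1)] psi_pos[OF fL(2)] by (intro divide_left_mono) auto
  finally show ?thesis .
qed

lemma psi_E:
  assumes "finite c" "X \<union> Y = c" "X \<inter> Y = {}" "X \<noteq> {}" "Y \<noteq> {}"
  shows "psi X * psi Y \<le> EE (card c) * dm c * psi c"
  using assms
proof (induction "card c" arbitrary: c X Y rule: less_induct)
  case less
  note f = less.prems(1) and un = less.prems(2) and dj = less.prems(3)
    and Xne = less.prems(4) and Yne = less.prems(5)
  obtain x0 y0 where "x0 \<in> X" "y0 \<in> Y" using Xne Yne by auto
  then have c2: "2 \<le> card c" using f un dj by (intro card2I[of c x0 y0]) auto
  define gap where "gap x = Min {w\<in>c. x < w} - x" for x
  define D where "D = c - {Max c}"
  have fD: "finite D" "D \<noteq> {}" using f c2 card2_ex[OF f c2] unfolding D_def by auto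
  have "Max (gap ` D) \<in> gap ` D" using fD by (intro Max_in) auto
  then obtain xs where xsD: "xs \<in> D" and xsmax: "gap xs = Max (gap ` D)" by auto
  have gmax: "gap x \<le> gap xs" if "x \<in> D" for x using xsmax that fD by simp
  have xs: "xs \<in> c" "xs < Max c" using xsD f D_def Max_remove_lt by auto
  define L where "L = {w\<in>c. w \<le> xs}"
  define U where "U = {w\<in>c. xs < w}"
  define G where "G = gap xs"
  have MC: "Max c \<in> c" using f xs by (intro Max_in) auto
  have LU: "L \<union> U = c" "L \<inter> U = {}" "xs \<in> L" "Max c \<in> U" using xs MC unfolding L_def U_def by auto
  have fL: "finite L" "finite U" using f unfolding L_def U_def by auto
  have cL: "card L < card c" "card U < card c"
    using f LU by (auto intro!: psubset_card_mono simp: L_def U_def)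
  have cLU: "card L + card U = card c" using LU fL card_Un_disjoint by metis
  have Umin: "Min U \<in> U" using fL LU by (intro Min_in) auto
  have Gpos: "0 < G" using Umin unfolding G_def gap_def U_def by simp
  have Ggap: "xs + G \<le> w" if "w \<in> c" "xs < w" for w
  proof -
    have "w \<in> U" using that U_def by simp
    then have "Min U \<le> w" using fL by simp
    then show ?thesis unfolding G_def gap_def U_def by simp
  qed
  have dmL: "dm L \<le> (real (card L) - 1) * G"
  proof (rule gaps_bound)
    show "finite L" "L \<noteq> {}" "0 \<le> G" using fL LU Gpos by auto
    fix x assume x: "x \<in> L" "x < Max L"
    have MLx: "Max L \<in> L" using fL LU by (intro Max_in) auto
    have "{w\<in>L. x < w} \<noteq> {}" using MLx x by auto
    then have mi: "Min {w\<in>L. x < w} \<in> {w\<in>L. x < w}" using fL by (intro Min_in) auto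
    have "Min {w\<in>L. x < w} = Min {w\<in>c. x < w}"
    proof (rule Min_eqI[symmetric])
      show "finite {w\<in>c. x < w}" using f by simp
      show "Min {w\<in>L. x < w} \<in> {w\<in>c. x < w}" using mi L_def by auto
      fix y assume y: "y \<in> {w\<in>c. x < w}"
      show "Min {w\<in>L. x < w} \<le> y"
      proof (cases "y \<le> xs")
        case True then have "y \<in> {w\<in>L. x < w}" using y L_def by auto
        then show ?thesis using fL by simp
      next
        case False
        have "Min {w\<in>L. x < w} \<le> xs" using mi L_def by simp
        then show ?thesis using False by simp
      qed
    qed
    moreover have "x \<in> D"
    proof -
      have "x \<le> xs" using x L_def by simp
      then have "x < Max c" using xs by simp
      then show ?thesis using x L_def D_def by auto
    qed
    ultimately show "Min {w\<in>L. x < w} - x \<le> G" using gmax G_def gap_def by simp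
  qed
  have dmU: "dm U \<le> (real (card U) - 1) * G"
  proof (rule gaps_bound)
    show "finite U" "U \<noteq> {}" "0 \<le> G" using fL LU Gpos by auto
    fix x assume x: "x \<in> U" "x < Max U"
    have "{w\<in>U. x < w} = {w\<in>c. x < w}" using x U_def by auto
    moreover have "x \<in> D"
    proof -
      have "Max U \<le> Max c" using fL x U_def f by (intro Max_mono) auto
      then show ?thesis using x U_def D_def by auto
    qed
    ultimately show "Min {w\<in>U. x < w} - x \<le> G" using gmax G_def gap_def by simp
  qed
  have psiLU: "psi L * psi U \<le> dm c * psi c"
  proof -
    have "psi L * psi U / dm c \<le> psi c" using psi_split_le[OF f xs] L_def U_def by simp
    moreover have "0 < dm c" using dm_pos[OF f c2] .
    ultimately show ?thesis by (simp add: divide_le_eq mult.commute)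
  qed
  have pos: "\<And>S. S \<subseteq> c \<Longrightarrow> 0 < psi S" using f by (meson finite_subset psi_pos)
  have dmc0: "0 \<le> dm c" using dm_pos[OF f c2] by simp
  obtain m where m: "card c = Suc m" using c2 by (cases "card c") auto
  have cLm: "card L \<le> m" "card U \<le> m" using cL m by auto
  have EEm: "EE (card L) \<le> EE m" "EE (card U) \<le> EE m" using cLm EE_mono by auto
  have EE1: "1 \<le> EE m" by (rule EE_ge1)
  have EEs: "EE (card c) = (real (Suc m))\<^sup>2 * (EE m)\<^sup>2" using m by simp
    have strad: "psi Z \<le> psi (Z \<inter> L) * psi (Z \<inter> U) / G"
    if "Z \<subseteq> c" "Z \<inter> L \<noteq> {}" "Z \<inter> U \<noteq> {}" for Z
  proof -
    have e1: "{w\<in>Z. w \<le> xs} = Z \<inter> L" "{w\<in>Z. xs < w} = Z \<inter> U" using that L_def U_def by auto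
    have "finite Z" using that f finite_subset by auto
    then show ?thesis using psi_straddle[of Z xs G] e1 that Gpos Ggap by auto
  qed
    have oneL: "psi S1 * psi S2 \<le> EE (card c) * dm c * psi c"
    if s: "S1 \<subseteq> L" "S1 \<noteq> {}" "S1 \<union> S2 = c" "S1 \<inter> S2 = {}" "S2 \<inter> L \<noteq> {}" for S1 S2
  proof -
    have S2U: "S2 \<inter> U = U" using s LU by auto
    have S2c: "S2 \<subseteq> c" using s by auto
    have p2: "psi S2 \<le> psi (S2 \<inter> L) * psi U / G" using strad[OF S2c s(5)] S2U LU by auto
    have IH: "psi S1 * psi (S2 \<inter> L) \<le> EE (card L) * dm L * psi L"
      using less.hyps[OF cL(1) fL(1), of S1 "S2 \<inter> L"] s LU by auto
    have "psi S1 * psi S2 \<le> psi S1 * (psi (S2 \<inter> L) * psi U / G)"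
      using p2 pos s by (intro mult_left_mono) (auto intro: less_imp_le)
    also have "\<dots> = (psi S1 * psi (S2 \<inter> L)) * psi U / G" by simp
    also have "\<dots> \<le> (EE (card L) * dm L * psi L) * psi U / G"
      using IH pos[of U] Gpos LU by (intro divide_right_mono mult_right_mono) auto
    also have "\<dots> \<le> (EE m * ((real m) * G) * psi L) * psi U / G"
    proof -
      have "dm L \<le> real m * G" using dmL cLm Gpos
        by (smt (verit) mult_right_mono of_nat_mono)
      moreover have "0 \<le> dm L" using dm_nonneg fL LU by auto
      ultimately have "EE (card L) * dm L \<le> EE m * (real m * G)"
        using EEm EE_ge1 by (intro mult_mono) auto
      then show ?thesis using pos[of L] pos[of U] Gpos LU
        by (intro divide_right_mono mult_right_mono) auto
    qed
    also have "\<dots> = (EE m * real m) * (psi L * psi U)" using Gpos by simp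
    also have "\<dots> \<le> (EE m * real m) * (dm c * psi c)"
      using psiLU EE1 by (intro mult_left_mono) auto
    also have "\<dots> \<le> EE (card c) * (dm c * psi c)"
    proof -
      have "EE m * real m \<le> (real (Suc m))\<^sup>2 * (EE m)\<^sup>2"
      proof -
        have "EE m * real m \<le> EE m * (real (Suc m))\<^sup>2" using EE1 m_le_sq by (intro mult_left_mono) auto
        also have "\<dots> \<le> (EE m)\<^sup>2 * (real (Suc m))\<^sup>2" using EE1 by (intro mult_right_mono) (auto simp: power2_eq_square)
        finally show ?thesis by (simp add: mult.commute)
      qed
      then show ?thesis using EEs dmc0 pos[of c] by (intro mult_right_mono) auto
    qed
    finally show ?thesis by simp
  qed
  have oneU: "psi S1 * psi S2 \<le> EE (card c) * dm c * psi c"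
    if s: "S1 \<subseteq> U" "S1 \<noteq> {}" "S1 \<union> S2 = c" "S1 \<inter> S2 = {}" "S2 \<inter> U \<noteq> {}" for S1 S2
  proof -
    have S2L: "S2 \<inter> L = L" using s LU by auto
    have S2c: "S2 \<subseteq> c" using s by auto
    have p2: "psi S2 \<le> psi L * psi (S2 \<inter> U) / G" using strad[OF S2c _ s(5)] S2L LU by auto
    have IH: "psi S1 * psi (S2 \<inter> U) \<le> EE (card U) * dm U * psi U"
      using less.hyps[OF cL(2) fL(2), of S1 "S2 \<inter> U"] s LU by auto
    have "psi S1 * psi S2 \<le> psi S1 * (psi L * psi (S2 \<inter> U) / G)"
      using p2 pos s by (intro mult_left_mono) (auto intro: less_imp_le)
    also have "\<dots> = (psi S1 * psi (S2 \<inter> U)) * psi L / G" by simp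
    also have "\<dots> \<le> (EE (card U) * dm U * psi U) * psi L / G"
      using IH pos[of L] Gpos LU by (intro divide_right_mono mult_right_mono) auto
    also have "\<dots> \<le> (EE m * ((real m) * G) * psi U) * psi L / G"
    proof -
      have "dm U \<le> real m * G" using dmU cLm Gpos
        by (smt (verit) mult_right_mono of_nat_mono)
      moreover have "0 \<le> dm U" using dm_nonneg fL LU by auto
      ultimately have "EE (card U) * dm U \<le> EE m * (real m * G)"
        using EEm EE_ge1 by (intro mult_mono) auto
      then show ?thesis using pos[of L] pos[of U] Gpos LU
        by (intro divide_right_mono mult_right_mono) auto
    qed
    also have "\<dots> = (EE m * real m) * (psi L * psi U)" using Gpos by simp
    also have "\<dots> \<le> (EE m * real m) * (dm c * psi c)"
      using psiLU EE1 by (intro mult_left_mono) auto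
    also have "\<dots> \<le> EE (card c) * (dm c * psi c)"
    proof -
      have "EE m * real m \<le> (real (Suc m))\<^sup>2 * (EE m)\<^sup>2"
      proof -
        have "EE m * real m \<le> EE m * (real (Suc m))\<^sup>2" using EE1 m_le_sq by (intro mult_left_mono) auto
        also have "\<dots> \<le> (EE m)\<^sup>2 * (real (Suc m))\<^sup>2" using EE1 by (intro mult_right_mono) (auto simp: power2_eq_square)
        finally show ?thesis by (simp add: mult.commute)
      qed
      then show ?thesis using EEs dmc0 pos[of c] by (intro mult_right_mono) auto
    qed
    finally show ?thesis by simp
  qed
  have both: "psi X * psi Y \<le> EE (card c) * dm c * psi c"
    if s: "X \<inter> L \<noteq> {}" "X \<inter> U \<noteq> {}" "Y \<inter> L \<noteq> {}" "Y \<inter> U \<noteq> {}"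
  proof -
    have Xc: "X \<subseteq> c" "Y \<subseteq> c" using un by auto
    have pX: "psi X \<le> psi (X \<inter> L) * psi (X \<inter> U) / G" using strad[OF Xc(1) s(1,2)] .
    have pY: "psi Y \<le> psi (Y \<inter> L) * psi (Y \<inter> U) / G" using strad[OF Xc(2) s(3,4)] .
    have IHL: "psi (X \<inter> L) * psi (Y \<inter> L) \<le> EE (card L) * dm L * psi L"
      using less.hyps[OF cL(1) fL(1), of "X \<inter> L" "Y \<inter> L"] s un dj LU by auto
    have IHU: "psi (X \<inter> U) * psi (Y \<inter> U) \<le> EE (card U) * dm U * psi U"
      using less.hyps[OF cL(2) fL(2), of "X \<inter> U" "Y \<inter> U"] s un dj LU by auto
    have bL: "EE (card L) * dm L \<le> EE m * (real m * G)"
    proof -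
      have "dm L \<le> real m * G" using dmL cLm Gpos by (smt (verit) mult_right_mono of_nat_mono)
      moreover have "0 \<le> dm L" using dm_nonneg fL LU by auto
      ultimately show ?thesis using EEm EE_ge1 by (intro mult_mono) auto
    qed
    have bU: "EE (card U) * dm U \<le> EE m * (real m * G)"
    proof -
      have "dm U \<le> real m * G" using dmU cLm Gpos by (smt (verit) mult_right_mono of_nat_mono)
      moreover have "0 \<le> dm U" using dm_nonneg fL LU by auto
      ultimately show ?thesis using EEm EE_ge1 by (intro mult_mono) auto
    qed
    have "psi X * psi Y \<le> (psi (X \<inter> L) * psi (X \<inter> U) / G) * (psi (Y \<inter> L) * psi (Y \<inter> U) / G)"
    proof (rule mult_mono[OF pX pY])
      show "0 \<le> psi Y" using pos Xc by (simp add: less_imp_le)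
      have "0 < psi (X \<inter> L)" "0 < psi (X \<inter> U)" using pos Xc by blast+
      then show "0 \<le> psi (X \<inter> L) * psi (X \<inter> U) / G"
        using Gpos by (simp add: less_imp_le)
    qed
    also have "\<dots> = (psi (X \<inter> L) * psi (Y \<inter> L)) * (psi (X \<inter> U) * psi (Y \<inter> U)) / (G * G)" by simp
    also have "\<dots> \<le> (EE (card L) * dm L * psi L) * (EE (card U) * dm U * psi U) / (G * G)"
    proof (rule divide_right_mono)
      have p1: "0 < psi (X \<inter> U)" "0 < psi (Y \<inter> U)" "0 < psi L" using pos Xc LU by blast+
      have "0 \<le> dm L" using dm_nonneg fL LU by auto
      then have "0 \<le> EE (card L) * dm L * psi L" using p1 by simp
      then show "(psi (X \<inter> L) * psi (Y \<inter> L)) * (psi (X \<inter> U) * psi (Y \<inter> U))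
          \<le> (EE (card L) * dm L * psi L) * (EE (card U) * dm U * psi U)"
        using p1 by (intro mult_mono[OF IHL IHU]) auto
      show "0 \<le> G * G" by simp
    qed
    also have "\<dots> \<le> (EE m * (real m * G) * psi L) * (EE m * (real m * G) * psi U) / (G * G)"
    proof (rule divide_right_mono)
      have p1: "0 < psi L" "0 < psi U" using pos LU by blast+
      have A: "EE (card L) * dm L * psi L \<le> EE m * (real m * G) * psi L"
        using bL p1 by (intro mult_right_mono) auto
      have B: "EE (card U) * dm U * psi U \<le> EE m * (real m * G) * psi U"
        using bU p1 by (intro mult_right_mono) auto
      have "0 \<le> dm U" using dm_nonneg fL LU by auto
      then have B0: "0 \<le> EE (card U) * dm U * psi U" using p1 by simp
      have A0: "0 \<le> EE m * (real m * G) * psi L" using p1 Gpos by simp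
      show "EE (card L) * dm L * psi L * (EE (card U) * dm U * psi U)
          \<le> EE m * (real m * G) * psi L * (EE m * (real m * G) * psi U)"
        by (rule mult_mono[OF A B A0 B0])
      show "0 \<le> G * G" by simp
    qed
    also have "\<dots> = ((EE m)\<^sup>2 * (real m)\<^sup>2) * (psi L * psi U)" using Gpos by (simp add: power2_eq_square)
    also have "\<dots> \<le> ((EE m)\<^sup>2 * (real m)\<^sup>2) * (dm c * psi c)"
      using psiLU by (intro mult_left_mono) auto
    also have "\<dots> \<le> EE (card c) * (dm c * psi c)"
    proof -
      have "(real m)\<^sup>2 \<le> (real (Suc m))\<^sup>2" by (intro power_mono) auto
      then have "(real m)\<^sup>2 * (EE m)\<^sup>2 \<le> (real (Suc m))\<^sup>2 * (EE m)\<^sup>2"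
        by (intro mult_right_mono) auto
      then have "(EE m)\<^sup>2 * (real m)\<^sup>2 \<le> (real (Suc m))\<^sup>2 * (EE m)\<^sup>2"
        by (simp only: mult.commute)
      then show ?thesis using EEs dmc0 pos[of c] by (intro mult_right_mono) auto
    qed
    finally show ?thesis by simp
  qed
  have dmpsi: "dm c * psi c \<le> EE (card c) * dm c * psi c"
  proof -
    have "1 * (dm c * psi c) \<le> EE (card c) * (dm c * psi c)"
      using EE_ge1[of "card c"] dmc0 pos[of c] by (intro mult_right_mono) auto
    then show ?thesis by (simp add: mult.assoc)
  qed
  have cases_Z: "Z \<subseteq> L \<or> Z \<subseteq> U \<or> (Z \<inter> L \<noteq> {} \<and> Z \<inter> U \<noteq> {})" if "Z \<subseteq> c" for Z
    using that LU by blast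
  have Xc: "X \<subseteq> c" "Y \<subseteq> c" using un by auto
  show ?case
  proof -
    consider (a) "X \<subseteq> L" | (b) "X \<subseteq> U" | (c) "X \<inter> L \<noteq> {} \<and> X \<inter> U \<noteq> {}" using cases_Z[OF Xc(1)] by blast
    then show ?thesis
    proof cases
      case a
      consider (a1) "Y \<subseteq> L" | (a2) "Y \<subseteq> U" | (a3) "Y \<inter> L \<noteq> {} \<and> Y \<inter> U \<noteq> {}" using cases_Z[OF Xc(2)] by blast
      then show ?thesis
      proof cases
        case a1 then have False using a un LU by blast then show ?thesis ..
      next
        case a2
        then have "X = L" "Y = U" using a un dj LU by blast+
        then show ?thesis using order_trans[OF psiLU dmpsi] by simp
      next
        case a3 then show ?thesis using oneL[of X Y] a Xne un dj by auto
      qed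
    next
      case b
      consider (b1) "Y \<subseteq> L" | (b2) "Y \<subseteq> U" | (b3) "Y \<inter> L \<noteq> {} \<and> Y \<inter> U \<noteq> {}" using cases_Z[OF Xc(2)] by blast
      then show ?thesis
      proof cases
        case b1
        then have "X = U" "Y = L" using b un dj LU by blast+
        then have "psi X * psi Y = psi L * psi U" by (simp add: mult.commute)
        then show ?thesis using order_trans[OF psiLU dmpsi] by simp
      next
        case b2 then have False using b un LU by blast then show ?thesis ..
      next
        case b3 then show ?thesis using oneU[of X Y] b Xne un dj by auto
      qed
    next
      case c
      consider (c1) "Y \<subseteq> L" | (c2) "Y \<subseteq> U" | (c3) "Y \<inter> L \<noteq> {} \<and> Y \<inter> U \<noteq> {}" using cases_Z[OF Xc(2)] by blast
      then show ?thesis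
      proof cases
        case c1
        have "psi Y * psi X \<le> EE (card c) * dm c * psi c"
          by (rule oneL) (use c1 c Yne un dj in auto)
        then show ?thesis by (simp only: mult.commute)
      next
        case c2
        have "psi Y * psi X \<le> EE (card c) * dm c * psi c"
          by (rule oneU) (use c2 c Yne un dj in auto)
        then show ?thesis by (simp only: mult.commute)
      next
        case c3 then show ?thesis using both c by auto
      qed
    qed
  qed
qed

lemma partitions_of_iff: "P \<in> partitions_of z \<longleftrightarrow> partition_on z P"
  by (simp add: partitions_of_def)

lemma finite_partitions: "finite z \<Longrightarrow> finite (partitions_of z)"
  unfolding partitions_of_def by (rule finitely_many_partition_on)

lemma part_props:
  assumes "finite z" "partition_on z P"
  shows "finite P" "\<And>b. b \<in> P \<Longrightarrow> finite b" "\<And>b. b \<in> P \<Longrightarrow> b \<noteq> {}" "\<And>b. b \<in> P \<Longrightarrow> b \<subseteq> z"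
proof -
  show "finite P" using assms finite_elements by blast
  fix b assume b: "b \<in> P"
  show "b \<subseteq> z" using assms(2) b partition_onD1 by blast
  then show "finite b" using assms(1) finite_subset by blast
  show "b \<noteq> {}" using assms(2) b partition_onD3 by blast
qed

lemma part_disj:
  assumes "partition_on z P" "b1 \<in> P" "b2 \<in> P" "b1 \<noteq> b2"
  shows "b1 \<inter> b2 = {}"
  using assms unfolding partition_on_def disjoint_def by blast

lemma part_eq_if_meet:
  assumes "partition_on z P" "b1 \<in> P" "b2 \<in> P" "x \<in> b1" "x \<in> b2"
  shows "b1 = b2"
  using part_disj[OF assms(1-3)] assms(4,5) by blast

lemma card_part_sum:
  assumes "finite z" "partition_on z P"
  shows "card z = (\<Sum>b\<in>P. card b)"
  using product_partition[OF assms(2)] part_props[OF assms] by blast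

lemma card_part_le:
  assumes "finite z" "partition_on z P"
  shows "card P \<le> card z"
proof -
  have "card P = (\<Sum>b\<in>P. 1)" by simp
  also have "\<dots> \<le> (\<Sum>b\<in>P. card b)"
    using part_props[OF assms] by (intro sum_mono) (auto simp: Suc_leI card_gt_0_iff)
  finally show ?thesis using card_part_sum[OF assms] by simp
qed

lemma pi0_part: "partition_on z (pi0 z)"
  unfolding pi0_def by (rule partition_on_singletons)

lemma pi0_in: "pi0 z \<in> partitions_of z"
  using pi0_part partitions_of_iff by blast

lemma card_pi0: "card (pi0 z) = card z"
  unfolding pi0_def by (simp add: card_image inj_on_def)

lemma card_eq_pi0:
  assumes "finite z" "partition_on z P" "card P = card z"
  shows "P = pi0 z"
proof -
  have fP: "finite P" using part_props[OF assms(1,2)] by simp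
  have s1: "(\<Sum>b\<in>P. card b) = (\<Sum>b\<in>P. 1)" using card_part_sum[OF assms(1,2)] assms(3) by simp
  have ge1: "\<And>b. b \<in> P \<Longrightarrow> 1 \<le> card b"
    using part_props[OF assms(1,2)] by (auto simp: Suc_leI card_gt_0_iff)
  have "\<forall>b\<in>P. card b = 1"
  proof (rule ccontr)
    assume "\<not> (\<forall>b\<in>P. card b = 1)"
    then obtain b where b: "b \<in> P" "card b \<noteq> 1" by blast
    then have "1 < card b" using ge1[of b] by simp
    then have "(\<Sum>b\<in>P. 1) < (\<Sum>b\<in>P. card b)"
      using fP ge1 b by (intro sum_strict_mono_ex1) auto
    then show False using s1 by simp
  qed
  then have single: "\<And>b. b \<in> P \<Longrightarrow> \<exists>x. b = {x}" by (meson card_1_singletonE)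
  show ?thesis
  proof (intro equalityI subsetI)
    fix b assume b: "b \<in> P"
    then obtain x where bx: "b = {x}" using single by blast
    then have "x \<in> z" using part_props(4)[OF assms(1,2) b] by simp
    then show "b \<in> pi0 z" unfolding pi0_def using bx by simp
  next
    fix b assume "b \<in> pi0 z"
    then obtain x where x: "x \<in> z" "b = {x}" unfolding pi0_def by auto
    then obtain c where c: "c \<in> P" "x \<in> c" using partition_onD1[OF assms(2)] by blast
    then obtain y where "c = {y}" using single by blast
    then show "b \<in> P" using c x by simp
  qed
qed

section \<open>Merging and splitting\<close>

lemma merge_part:
  assumes P: "partition_on z P" and b: "b1 \<in> P" "b2 \<in> P" "b1 \<noteq> b2"
  shows "partition_on z (merge_blocks P b1 b2)"
proof -
  have "\<Union>(merge_blocks P b1 b2) = \<Union>P" unfolding merge_blocks_def using b by auto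
  then have U: "\<Union>(merge_blocks P b1 b2) = z" using partition_onD1[OF P] by simp
  show ?thesis
  proof (rule partition_onI[OF U])
    fix p q assume pq: "p \<in> merge_blocks P b1 b2" "q \<in> merge_blocks P b1 b2" "p \<noteq> q"
    have R: "\<And>c1 c2. c1 \<in> P - {b1, b2} \<Longrightarrow> c2 \<in> P - {b1, b2} \<Longrightarrow> c1 \<noteq> c2 \<Longrightarrow> c1 \<inter> c2 = {}"
      using part_disj[OF P] by blast
    have A: "\<And>c. c \<in> P - {b1, b2} \<Longrightarrow> c \<inter> (b1 \<union> b2) = {}"
      using part_disj[OF P] b by blast
    have "p \<inter> q = {}"
    proof -
      have "p = b1 \<union> b2 \<or> p \<in> P - {b1, b2}" "q = b1 \<union> b2 \<or> q \<in> P - {b1, b2}"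
        using pq unfolding merge_blocks_def by auto
      then show ?thesis
      proof (elim disjE)
      qed (use A R pq(3) in \<open>auto simp: Int_commute\<close>)
    qed
    then show "disjnt p q" by (simp add: disjnt_def)
  next
    show "{} \<notin> merge_blocks P b1 b2" using partition_onD3[OF P] b unfolding merge_blocks_def by auto
  qed
qed

lemma union_notin:
  assumes P: "partition_on z P" and b: "b1 \<in> P" "b2 \<in> P" "b1 \<noteq> b2"
  shows "b1 \<union> b2 \<notin> P"
proof
  assume a: "b1 \<union> b2 \<in> P"
  have "b1 \<noteq> {}" using partition_onD3[OF P] b by auto
  then obtain x where "x \<in> b1" by auto
  then have "b1 = b1 \<union> b2" using part_eq_if_meet[OF P b(1) a] by auto
  moreover have "b2 \<noteq> {}" using partition_onD3[OF P] b by auto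
  then obtain y where "y \<in> b2" by auto
  ultimately have "y \<in> b1" by auto
  then show False using part_disj[OF P b] \<open>y \<in> b2\<close> by auto
qed

lemma merge_ne:
  assumes P: "partition_on z P" and b: "b1 \<in> P" "b2 \<in> P" "b1 \<noteq> b2"
  shows "merge_blocks P b1 b2 \<noteq> P"
  using union_notin[OF assms] unfolding merge_blocks_def by auto

lemma card_merge:
  assumes z: "finite z" and P: "partition_on z P" and b: "b1 \<in> P" "b2 \<in> P" "b1 \<noteq> b2"
  shows "card (merge_blocks P b1 b2) + 1 = card P"
proof -
  have fP: "finite P" using part_props[OF z P] by simp
  have "b1 \<union> b2 \<notin> P - {b1, b2}" using union_notin[OF P b] by auto
  then have "card (merge_blocks P b1 b2) = card (P - {b1, b2}) + 1"
    unfolding merge_blocks_def using fP by simp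
  moreover have "card (P - {b1, b2}) + 2 = card P"
    using fP b card_Diff_subset[of "{b1,b2}" P] card_mono[of P "{b1,b2}"] by auto
  ultimately show ?thesis by simp
qed

definition cons :: "real set \<Rightarrow> (real \<times> real) set" where
  "cons b = {(x, y). x \<in> b \<and> y \<in> b \<and> x < y \<and> \<not> (\<exists>w\<in>b. x < w \<and> w < y)}"

lemma split_low_high:
  assumes "(x, y) \<in> cons b"
  shows "{w\<in>b. w \<le> x} \<union> {w\<in>b. y \<le> w} = b" "{w\<in>b. w \<le> x} \<inter> {w\<in>b. y \<le> w} = {}"
    "x \<in> {w\<in>b. w \<le> x}" "y \<in> {w\<in>b. y \<le> w}" "{w\<in>b. w \<le> x} \<noteq> {w\<in>b. y \<le> w}"
    "{w\<in>b. y \<le> w} = {w\<in>b. x < w}" "x \<in> b" "y \<in> b" "x < y"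
proof -
  have c: "x \<in> b" "y \<in> b" "x < y" "\<And>w. w \<in> b \<Longrightarrow> x < w \<Longrightarrow> w < y \<Longrightarrow> False"
    using assms unfolding cons_def by auto
  show "x \<in> b" "y \<in> b" "x < y" using c by auto
  have k: "\<And>w. w \<in> b \<Longrightarrow> w \<le> x \<or> y \<le> w" using c(4) by force
  show "{w\<in>b. w \<le> x} \<union> {w\<in>b. y \<le> w} = b" using k by auto
  show "{w\<in>b. w \<le> x} \<inter> {w\<in>b. y \<le> w} = {}" using c(3) by auto
  show "x \<in> {w\<in>b. w \<le> x}" "y \<in> {w\<in>b. y \<le> w}" using c by auto
  show "{w\<in>b. w \<le> x} \<noteq> {w\<in>b. y \<le> w}" using c by auto
  show "{w\<in>b. y \<le> w} = {w\<in>b. x < w}" using k c(3) by force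
qed

lemma gen_disj:
  assumes "p \<in> insert A (insert B R)" "q \<in> insert A (insert B R)" "p \<noteq> q" "A \<inter> B = {}"
    "\<And>c. c \<in> R \<Longrightarrow> c \<inter> A = {} \<and> c \<inter> B = {}"
    "\<And>c1 c2. c1 \<in> R \<Longrightarrow> c2 \<in> R \<Longrightarrow> c1 \<noteq> c2 \<Longrightarrow> c1 \<inter> c2 = {}"
  shows "p \<inter> q = {}"
proof -
  have "p = A \<or> p = B \<or> p \<in> R" "q = A \<or> q = B \<or> q \<in> R" using assms(1,2) by auto
  then show ?thesis
  proof (elim disjE)
  qed (use assms(3-6) in \<open>auto simp: Int_commute\<close>)
qed

lemma split_part:
  assumes P: "partition_on z P" and b: "b \<in> P" and c: "(x, y) \<in> cons b"
  shows "partition_on z (split_block P b x y)"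
proof -
  note lh = split_low_high[OF c]
  have "\<Union>(split_block P b x y) = \<Union>P" unfolding split_block_def using b lh(1) by auto
  then have U: "\<Union>(split_block P b x y) = z" using partition_onD1[OF P] by simp
  show ?thesis
  proof (rule partition_onI[OF U])
    fix p q assume pq: "p \<in> split_block P b x y" "q \<in> split_block P b x y" "p \<noteq> q"
    have d: "\<And>c. c \<in> P \<Longrightarrow> c \<noteq> b \<Longrightarrow> c \<inter> b = {}" using part_disj[OF P] b by blast
    have sub: "{w\<in>b. w \<le> x} \<subseteq> b" "{w\<in>b. y \<le> w} \<subseteq> b" by auto
    have R: "\<And>c1 c2. c1 \<in> P - {b} \<Longrightarrow> c2 \<in> P - {b} \<Longrightarrow> c1 \<noteq> c2 \<Longrightarrow> c1 \<inter> c2 = {}"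
      using part_disj[OF P] by blast
    have A: "\<And>c. c \<in> P - {b} \<Longrightarrow> c \<inter> {w\<in>b. w \<le> x} = {} \<and> c \<inter> {w\<in>b. y \<le> w} = {}"
      using d sub by blast
    show "disjnt p q"
      using gen_disj[OF pq[unfolded split_block_def] lh(2) A R] by (simp add: disjnt_def)
  next
    show "{} \<notin> split_block P b x y" using partition_onD3[OF P] lh(3,4) unfolding split_block_def by auto
  qed
qed

lemma low_notin:
  assumes P: "partition_on z P" and b: "b \<in> P" and c: "(x, y) \<in> cons b"
  shows "{w\<in>b. w \<le> x} \<notin> P - {b}" "{w\<in>b. y \<le> w} \<notin> P - {b}"
proof -
  note lh = split_low_high[OF c]
  have xb: "x \<in> b" "y \<in> b" using lh by auto
  show "{w\<in>b. w \<le> x} \<notin> P - {b}"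
  proof
    assume a: "{w\<in>b. w \<le> x} \<in> P - {b}"
    then have "{w\<in>b. w \<le> x} = b" using part_eq_if_meet[OF P _ b lh(3) xb(1)] by auto
    then show False using a by auto
  qed
  show "{w\<in>b. y \<le> w} \<notin> P - {b}"
  proof
    assume a: "{w\<in>b. y \<le> w} \<in> P - {b}"
    then have "{w\<in>b. y \<le> w} = b" using part_eq_if_meet[OF P _ b lh(4) xb(2)] by auto
    then show False using a by auto
  qed
qed

lemma split_ne:
  assumes P: "partition_on z P" and b: "b \<in> P" and c: "(x, y) \<in> cons b"
  shows "split_block P b x y \<noteq> P"
proof
  assume e: "split_block P b x y = P"
  have "{w\<in>b. w \<le> x} \<in> P" using e unfolding split_block_def by blast
  moreover have "{w\<in>b. w \<le> x} \<noteq> b" using split_low_high[OF c] by auto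
  ultimately show False using low_notin[OF P b c] by auto
qed

lemma card_split:
  assumes z: "finite z" and P: "partition_on z P" and b: "b \<in> P" and c: "(x, y) \<in> cons b"
  shows "card (split_block P b x y) = card P + 1"
proof -
  have fP: "finite P" using part_props[OF z P] by simp
  note ln = low_notin[OF P b c] and lh = split_low_high[OF c]
  have "card (split_block P b x y) = card (P - {b}) + 2"
    unfolding split_block_def using fP ln lh(5) by simp
  moreover have "card (P - {b}) + 1 = card P" using fP b card_Suc_Diff1 by fastforce
  ultimately show ?thesis by simp
qed

lemma cons_finite: "finite b \<Longrightarrow> finite (cons b)"
  by (rule finite_subset[of _ "b \<times> b"]) (auto simp: cons_def)

lemma cons_telescope:
  fixes b :: "real set"
  assumes "finite b" "b \<noteq> {}"
  shows "(\<Sum>(x, y)\<in>cons b. y - x) = dm b"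
  using assms
proof (induction "card b" arbitrary: b rule: less_induct)
  case less
  note f = less.prems(1) and ne = less.prems(2)
  show ?case
  proof (cases "card b \<le> 1")
    case True
    then have "card b = 1" using f ne by (simp add: Suc_leI card_gt_0_iff le_antisym)
    then obtain a where a: "b = {a}" using card_1_singletonE by blast
    then have "cons b = {}" unfolding cons_def by auto
    then show ?thesis using a by (simp add: dm_def)
  next
    case False
    then have c2: "2 \<le> card b" by simp
    define b' where "b' = b - {Max b}"
    have MS: "Max b \<in> b" using f ne by simp
    have ne': "b' \<noteq> {}"
    proof
      assume "b' = {}"
      then have "b \<subseteq> {Max b}" unfolding b'_def by auto
      then have "card b \<le> 1" by (rule sub_single_card)
      then show False using c2 by simp
    qed
    have fb': "finite b'" using f b'_def by simp
    have cb': "card b' < card b" using MS f c2 unfolding b'_def by simp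
    have m': "Max b' \<in> b'" using fb' ne' by simp
    then have lt: "Max b' < Max b" using f unfolding b'_def by (rule Max_remove_lt[rotated])
    have consb: "cons b = insert (Max b', Max b) (cons b')"
    proof (intro equalityI subsetI)
      fix p assume p: "p \<in> cons b"
      obtain x y where xy: "p = (x, y)" by (cases p)
      have c: "x \<in> b" "y \<in> b" "x < y" "\<And>w. w \<in> b \<Longrightarrow> x < w \<Longrightarrow> w < y \<Longrightarrow> False"
        using p xy unfolding cons_def by auto
      show "p \<in> insert (Max b', Max b) (cons b')"
      proof (cases "y = Max b")
        case True
        have xb': "x \<in> b'" using c True b'_def by auto
        then have "x \<le> Max b'" using fb' by simp
        moreover have "\<not> x < Max b'" using c(4)[of "Max b'"] m' b'_def lt True by auto
        ultimately have "x = Max b'" by simp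
        then show ?thesis using xy True by simp
      next
        case False
        have "y \<le> Max b" using c f by simp
        then have "x \<noteq> Max b" using c by auto
        then have "x \<in> b'" "y \<in> b'" using c False b'_def by auto
        then have "(x, y) \<in> cons b'" using c b'_def unfolding cons_def by auto
        then show ?thesis using xy by simp
      qed
    next
      fix p assume p: "p \<in> insert (Max b', Max b) (cons b')"
      show "p \<in> cons b"
      proof (cases "p = (Max b', Max b)")
        case True
        have "\<not> (\<exists>w\<in>b. Max b' < w \<and> w < Max b)"
        proof
          assume "\<exists>w\<in>b. Max b' < w \<and> w < Max b"
          then obtain w where w: "w \<in> b" "Max b' < w" "w < Max b" by blast
          then have "w \<in> b'" using b'_def by auto
          then have "w \<le> Max b'" using fb' by simp
          then show False using w by simp
        qed
        then show ?thesis using True m' MS lt b'_def unfolding cons_def by auto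
      next
        case False
        then have "p \<in> cons b'" using p by simp
        then obtain x y where xy: "p = (x, y)" "x \<in> b'" "y \<in> b'" "x < y"
          "\<And>w. w \<in> b' \<Longrightarrow> x < w \<Longrightarrow> w < y \<Longrightarrow> False" unfolding cons_def by auto
        have "y \<le> Max b'" using xy fb' by simp
        have "\<not> (\<exists>w\<in>b. x < w \<and> w < y)"
        proof
          assume "\<exists>w\<in>b. x < w \<and> w < y"
          then obtain w where w: "w \<in> b" "x < w" "w < y" by blast
          then have "w \<noteq> Max b" using \<open>y \<le> Max b'\<close> lt by auto
          then have "w \<in> b'" using w b'_def by auto
          then show False using xy w by blast
        qed
        then show ?thesis using xy b'_def unfolding cons_def by auto
      qed
    qed
    have notin: "(Max b', Max b) \<notin> cons b'" unfolding cons_def b'_def by auto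
    have "(\<Sum>(x, y)\<in>cons b. y - x) = (Max b - Max b') + (\<Sum>(x, y)\<in>cons b'. y - x)"
      unfolding consb using notin cons_finite[OF fb'] by simp
    also have "\<dots> = (Max b - Max b') + dm b'" using less.hyps[OF cb' fb' ne'] by simp
    also have "\<dots> = dm b"
    proof -
      have "Min b = Min b'"
      proof -
        have "Min b' \<in> b'" using fb' ne' by simp
        then have "Min b' \<in> b" using b'_def by simp
        moreover have "\<forall>y\<in>b. Min b' \<le> y"
        proof
          fix y assume "y \<in> b"
          then show "Min b' \<le> y"
          proof (cases "y = Max b")
            case True
            have "Min b' \<le> Max b'" using fb' m' by simp
            then show ?thesis using lt True by simp
          next
            case False then show ?thesis using \<open>y \<in> b\<close> fb' b'_def by simp
          qed
        qed
        ultimately show ?thesis using f by (intro Min_eqI) auto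
      qed
      then show ?thesis unfolding dm_def by simp
    qed
    finally show ?thesis .
  qed
qed

lemma Max_absdiff:
  fixes b :: "real set"
  assumes "finite b" "b \<noteq> {}"
  shows "Max {\<bar>x - y\<bar> | x y. x \<in> b \<and> y \<in> b} = dm b"
proof -
  have fin: "finite {\<bar>x - y\<bar> | x y. x \<in> b \<and> y \<in> b}"
  proof -
    have "{\<bar>x - y\<bar> | x y. x \<in> b \<and> y \<in> b} = (\<lambda>(x, y). \<bar>x - y\<bar>) ` (b \<times> b)" by auto
    then show ?thesis using assms by simp
  qed
  show ?thesis unfolding dm_def
  proof (rule Max_eqI[OF fin])
    fix d assume "d \<in> {\<bar>x - y\<bar> | x y. x \<in> b \<and> y \<in> b}"
    then obtain x y where "d = \<bar>x - y\<bar>" "x \<in> b" "y \<in> b" by auto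
    moreover have "x \<le> Max b" "y \<le> Max b" "Min b \<le> x" "Min b \<le> y" using calculation assms by auto
    ultimately show "d \<le> Max b - Min b" by auto
  next
    have "Min b \<le> Max b" using assms by (simp add: Min_le_iff)
    then have "Max b - Min b = \<bar>Max b - Min b\<bar>" by simp
    moreover have "Max b \<in> b" "Min b \<in> b" using assms by auto
    ultimately show "Max b - Min b \<in> {\<bar>x - y\<bar> | x y. x \<in> b \<and> y \<in> b}" by blast
  qed
qed

lemma cover_length_dm:
  assumes "finite z" "partition_on z P"
  shows "cover_length P = (\<Sum>b\<in>P. dm b)"
  unfolding cover_length_def using part_props[OF assms] Max_absdiff by (intro sum.cong) auto

lemma dm_nonneg_part:
  assumes "finite z" "partition_on z P" "b \<in> P"
  shows "0 \<le> dm b"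
  using part_props[OF assms(1,2)] assms(3) dm_nonneg by auto

lemma cover_nonneg:
  assumes "finite z" "partition_on z P"
  shows "0 \<le> cover_length P"
  unfolding cover_length_dm[OF assms] using dm_nonneg_part[OF assms] by (simp add: sum_nonneg)

section \<open>Rates\<close>

definition pairs_of :: "real set set \<Rightarrow> real set set set" where
  "pairs_of r = {A. A \<subseteq> r \<and> card A = 2}"

definition mgA :: "real set set \<Rightarrow> real set set \<Rightarrow> real set set" where
  "mgA r A = insert (\<Union>A) (r - A)"

lemma merge_events_eq: "merge_events r Q = {A. A \<in> pairs_of r \<and> mgA r A = Q}"
proof (intro equalityI subsetI)
  fix A assume "A \<in> merge_events r Q"
  then obtain b1 b2 where "A = {b1, b2}" "b1 \<in> r" "b2 \<in> r" "b1 \<noteq> b2" "Q = merge_blocks r b1 b2"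
    unfolding merge_events_def by auto
  then show "A \<in> {A. A \<in> pairs_of r \<and> mgA r A = Q}"
    unfolding pairs_of_def mgA_def merge_blocks_def by auto
next
  fix A assume "A \<in> {A. A \<in> pairs_of r \<and> mgA r A = Q}"
  then have A: "A \<subseteq> r" "card A = 2" "mgA r A = Q" unfolding pairs_of_def by auto
  then obtain b1 b2 where "A = {b1, b2}" "b1 \<noteq> b2" by (meson card_2_iff)
  then show "A \<in> merge_events r Q"
    using A unfolding merge_events_def mgA_def merge_blocks_def by auto
qed

definition spl :: "real set set \<Rightarrow> real set \<times> real \<times> real \<Rightarrow> real set set" where
  "spl r e = (case e of (b, x, y) \<Rightarrow> split_block r b x y)"

lemma split_events_eq: "split_events r Q = {e. e \<in> Sigma r cons \<and> spl r e = Q}"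
  unfolding split_events_def spl_def cons_def by auto

lemma split_events_finite:
  assumes "finite z" "partition_on z r"
  shows "finite (split_events r Q)"
proof -
  have "finite (Sigma r cons)" using part_props[OF assms] cons_finite by auto
  then show ?thesis unfolding split_events_eq by simp
qed

lemma total_rate:
  assumes z: "finite z" and r: "r \<in> partitions_of z"
  shows "arg_total_rate z \<rho> r = real (card r choose 2) + \<rho> * cover_length r"
proof -
  have P: "partition_on z r" using r partitions_of_iff by blast
  have fr: "finite r" using part_props[OF z P] by simp
  define T where "T = partitions_of z - {r}"
  have fT: "finite T" using finite_partitions[OF z] T_def by simp
  have fpairs: "finite (pairs_of r)" unfolding pairs_of_def using fr by simp
  have img1: "mgA r ` pairs_of r \<subseteq> T"
  proof
    fix Q assume "Q \<in> mgA r ` pairs_of r"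
    then obtain A where A: "A \<subseteq> r" "card A = 2" "Q = mgA r A" unfolding pairs_of_def by auto
    then obtain b1 b2 where b: "A = {b1, b2}" "b1 \<noteq> b2" by (meson card_2_iff)
    then have Q: "Q = merge_blocks r b1 b2" using A unfolding mgA_def merge_blocks_def by auto
    show "Q \<in> T" unfolding T_def Q using merge_part[OF P] merge_ne[OF P] b A
      by (auto simp: partitions_of_iff)
  qed
  have fsig: "finite (Sigma r cons)" using part_props[OF z P] cons_finite fr by auto
  have img2: "spl r ` Sigma r cons \<subseteq> T"
  proof
    fix Q assume "Q \<in> spl r ` Sigma r cons"
    then obtain b x y where e: "b \<in> r" "(x, y) \<in> cons b" "Q = split_block r b x y"
      unfolding spl_def by auto
    show "Q \<in> T" unfolding T_def e(3) using split_part[OF P e(1,2)] split_ne[OF P e(1,2)]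
      by (auto simp: partitions_of_iff)
  qed
  have s1: "(\<Sum>Q\<in>T. real (card (merge_events r Q))) = real (card r choose 2)"
  proof -
    have "(\<Sum>Q\<in>T. real (card (merge_events r Q))) = (\<Sum>Q\<in>T. \<Sum>A\<in>{A. A \<in> pairs_of r \<and> mgA r A = Q}. 1)"
      unfolding merge_events_eq by simp
    also have "\<dots> = (\<Sum>A\<in>pairs_of r. 1)" using sum.group[OF fpairs fT img1, of "\<lambda>_. (1::real)"] by simp
    also have "\<dots> = real (card (pairs_of r))" by simp
    also have "\<dots> = real (card r choose 2)" unfolding pairs_of_def using n_subsets[OF fr] by simp
    finally show ?thesis .
  qed
  have s2: "(\<Sum>Q\<in>T. \<Sum>(b, x, y)\<in>split_events r Q. \<rho> * (y - x)) = \<rho> * cover_length r"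
  proof -
    have "(\<Sum>Q\<in>T. \<Sum>(b, x, y)\<in>split_events r Q. \<rho> * (y - x))
        = (\<Sum>Q\<in>T. \<Sum>e\<in>{e. e \<in> Sigma r cons \<and> spl r e = Q}. (\<lambda>(b, x, y). \<rho> * (y - x)) e)"
      unfolding split_events_eq by simp
    also have "\<dots> = (\<Sum>e\<in>Sigma r cons. (\<lambda>(b, x, y). \<rho> * (y - x)) e)"
      by (rule sum.group[OF fsig fT img2])
    also have "\<dots> = (\<Sum>b\<in>r. \<Sum>(x, y)\<in>cons b. \<rho> * (y - x))"
      using fr part_props[OF z P] cons_finite by (subst sum.Sigma[symmetric]) (auto simp: case_prod_beta)
    also have "\<dots> = (\<Sum>b\<in>r. \<rho> * dm b)"
    proof (rule sum.cong[OF refl])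
      fix b assume b: "b \<in> r"
      have "(\<Sum>(x, y)\<in>cons b. \<rho> * (y - x)) = \<rho> * (\<Sum>(x, y)\<in>cons b. y - x)"
        by (simp add: sum_distrib_left case_prod_beta)
      also have "\<dots> = \<rho> * dm b" using cons_telescope part_props[OF z P] b by simp
      finally show "(\<Sum>(x, y)\<in>cons b. \<rho> * (y - x)) = \<rho> * dm b" .
    qed
    also have "\<dots> = \<rho> * cover_length r" unfolding cover_length_dm[OF z P] by (simp add: sum_distrib_left)
    finally show ?thesis .
  qed
  show ?thesis
    unfolding arg_total_rate_def arg_rate_def T_def[symmetric] sum.distrib s1 s2 ..
qed

lemma split_events_pos:
  "e \<in> split_events r Q \<Longrightarrow> 0 < (case e of (b, x, y) \<Rightarrow> y - x)"
  unfolding split_events_def by auto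

lemma rate_nonneg: "0 \<le> \<rho> \<Longrightarrow> 0 \<le> arg_rate \<rho> P Q"
  unfolding arg_rate_def split_events_def
  by (intro add_nonneg_nonneg sum_nonneg) (auto intro!: mult_nonneg_nonneg)

lemma total_nonneg: "0 \<le> \<rho> \<Longrightarrow> 0 \<le> arg_total_rate z \<rho> P"
  unfolding arg_total_rate_def by (intro sum_nonneg rate_nonneg)

lemma jump_nonneg: "0 \<le> \<rho> \<Longrightarrow> 0 \<le> arg_jump z \<rho> P Q"
  unfolding arg_jump_def using rate_nonneg total_nonneg by simp

lemma rate_le_total:
  assumes "finite z" "Q \<in> partitions_of z" "Q \<noteq> P" "0 \<le> \<rho>"
  shows "arg_rate \<rho> P Q \<le> arg_total_rate z \<rho> P"
  unfolding arg_total_rate_def using assms finite_partitions[OF assms(1)] rate_nonneg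
  by (intro member_le_sum) auto

lemma jump_le1:
  assumes "finite z" "Q \<in> partitions_of z" "0 \<le> \<rho>"
  shows "arg_jump z \<rho> P Q \<le> 1"
proof (cases "Q = P")
  case True then show ?thesis unfolding arg_jump_def by simp
next
  case False
  have "arg_rate \<rho> P Q \<le> arg_total_rate z \<rho> P" using rate_le_total assms False by auto
  moreover have "0 \<le> arg_total_rate z \<rho> P" using total_nonneg[OF assms(3)] .
  moreover have "0 \<le> arg_rate \<rho> P Q" using rate_nonneg[OF assms(3)] .
  ultimately show ?thesis unfolding arg_jump_def using False
    by (cases "arg_total_rate z \<rho> P = 0") (auto simp: divide_le_eq_1)
qed

lemma merge_events_finite:
  assumes "finite z" "partition_on z r"
  shows "finite (merge_events r Q)"
proof -
  have "merge_events r Q \<subseteq> Pow r" unfolding merge_events_def by auto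
  then show ?thesis using part_props[OF assms] finite_subset by blast
qed

lemma merge_events_mem:
  "A \<in> merge_events r Q \<longleftrightarrow> (\<exists>b1 b2. A = {b1, b2} \<and> b1 \<in> r \<and> b2 \<in> r \<and> b1 \<noteq> b2 \<and> Q = merge_blocks r b1 b2)"
  unfolding merge_events_def by (simp only: mem_Collect_eq)

lemma merge_events_card_le1:
  assumes z: "finite z" and P: "partition_on z r"
  shows "card (merge_events r Q) \<le> 1"
proof -
  have "\<forall>A\<in>merge_events r Q. \<forall>A'\<in>merge_events r Q. A = A'"
  proof (intro ballI)
    fix A A' assume AA: "A \<in> merge_events r Q" "A' \<in> merge_events r Q"
    have key: "A = {b \<in> r. b \<subseteq> \<Union>(Q - r)}" if Ain: "A \<in> merge_events r Q" for A
    proof -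
      obtain b1 b2 where b: "A = {b1, b2}" "b1 \<in> r" "b2 \<in> r" "b1 \<noteq> b2" "Q = merge_blocks r b1 b2"
        using Ain unfolding merge_events_mem by blast
      have un: "b1 \<union> b2 \<notin> r" using union_notin[OF P b(2-4)] .
      have "Q - r = {b1 \<union> b2}" unfolding b(5) merge_blocks_def using un by auto
      then have U: "\<Union>(Q - r) = b1 \<union> b2" by simp
      show ?thesis unfolding U
      proof (intro equalityI subsetI)
        fix b assume "b \<in> A" then show "b \<in> {b \<in> r. b \<subseteq> b1 \<union> b2}" using b by auto
      next
        fix b assume bb: "b \<in> {b \<in> r. b \<subseteq> b1 \<union> b2}"
        then have "b \<noteq> {}" using partition_onD3[OF P] by auto
        then obtain x where x: "x \<in> b" by auto
        have br: "b \<in> r" using bb by simp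
        have "x \<in> b1 \<or> x \<in> b2" using bb x by auto
        then show "b \<in> A"
        proof
          assume "x \<in> b1" then have "b = b1" using part_eq_if_meet[OF P br b(2) x] by simp
          then show ?thesis using b by simp
        next
          assume "x \<in> b2" then have "b = b2" using part_eq_if_meet[OF P br b(3) x] by simp
          then show ?thesis using b by simp
        qed
      qed
    qed
    show "A = A'" using key[OF AA(1)] key[OF AA(2)] by simp
  qed
  then show ?thesis using card_le_Suc0_iff_eq[OF merge_events_finite[OF z P, of Q]] by simp
qed

lemma is_merge_card:
  assumes "finite z" "partition_on z r" "is_merge r q"
  shows "card q + 1 = card r"
  using assms card_merge unfolding is_merge_def by blast

lemma is_merge_part:
  assumes "partition_on z r" "is_merge r q"
  shows "partition_on z q"
  using assms merge_part unfolding is_merge_def by blast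

lemma split_events_card:
  assumes "finite z" "partition_on z r" "split_events r q \<noteq> {}"
  shows "card q = card r + 1"
proof -
  obtain b x y where "(b, x, y) \<in> split_events r q" using assms(3) by auto
  then have "b \<in> r" "(x, y) \<in> cons b" "q = split_block r b x y"
    unfolding split_events_def cons_def by auto
  then show ?thesis using card_split[OF assms(1,2)] by simp
qed

lemma merge_rate:
  assumes z: "finite z" and P: "partition_on z r" and m: "is_merge r q"
  shows "arg_rate \<rho> r q = 1"
proof -
  have se: "split_events r q = {}"
    using split_events_card[OF z P] is_merge_card[OF z P m] by fastforce
  have "merge_events r q \<noteq> {}" using m unfolding is_merge_def merge_events_def by auto
  moreover have "finite (merge_events r q)" by (rule merge_events_finite[OF z P])
  ultimately have "card (merge_events r q) = 1"
    using merge_events_card_le1[OF z P, of q] by (simp add: card_gt_0_iff le_antisym Suc_leI)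
  then show ?thesis unfolding arg_rate_def se by simp
qed

lemma rate_cases:
  assumes "arg_rate \<rho> r q \<noteq> 0"
  shows "is_merge r q \<or> split_events r q \<noteq> {}"
proof (rule ccontr)
  assume "\<not> (is_merge r q \<or> split_events r q \<noteq> {})"
  then have "merge_events r q = {}" "split_events r q = {}"
    unfolding is_merge_def merge_events_def by auto
  then show False using assms unfolding arg_rate_def by simp
qed

lemma pi0_no_split: "split_events (pi0 z) q = {}"
  unfolding split_events_def pi0_def by auto

lemma min_dist_props:
  assumes z: "finite z" and c2: "2 \<le> card z"
  shows "0 < min_dist z" "\<And>x y. x \<in> z \<Longrightarrow> y \<in> z \<Longrightarrow> x \<noteq> y \<Longrightarrow> min_dist z \<le> \<bar>x - y\<bar>"
proof -
  define D where "D = {\<bar>x - y\<bar> | x y. x \<in> z \<and> y \<in> z \<and> x \<noteq> y}"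
  have fD: "finite D"
  proof -
    have "D \<subseteq> (\<lambda>(x, y). \<bar>x - y\<bar>) ` (z \<times> z)" unfolding D_def by auto
    then show ?thesis using z finite_subset by blast
  qed
  obtain a b where ab: "a \<in> z" "b \<in> z" "a \<noteq> b"
  proof -
    obtain a where "a \<in> z" using c2 by fastforce
    moreover have "\<not> z \<subseteq> {a}" using c2 sub_single_card by fastforce
    ultimately show ?thesis using that by blast
  qed
  then have neD: "D \<noteq> {}" unfolding D_def by auto
  show "0 < min_dist z" unfolding min_dist_def D_def[symmetric]
    using Min_in[OF fD neD] unfolding D_def by auto
  fix x y assume "x \<in> z" "y \<in> z" "x \<noteq> y"
  then have "\<bar>x - y\<bar> \<in> D" unfolding D_def by auto
  then show "min_dist z \<le> \<bar>x - y\<bar>" unfolding min_dist_def D_def[symmetric] using fD by simp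
qed

lemma dm_ge_alpha:
  assumes z: "finite z" and c2: "2 \<le> card z" and bz: "b \<subseteq> z" and b2: "2 \<le> card b"
  shows "min_dist z \<le> dm b"
proof -
  have fb: "finite b" using bz z finite_subset by blast
  obtain x where x: "x \<in> b" "x < Max b" using card2_ex[OF fb b2] by blast
  have bne: "b \<noteq> {}" using x by auto
  have M: "Max b \<in> b" "Min b \<in> b" using fb bne by auto
  have "Min b \<le> x" using fb x by simp
  then have lt: "Min b < Max b" using x by simp
  then have "min_dist z \<le> \<bar>Max b - Min b\<bar>" using min_dist_props(2)[OF z c2, of "Max b" "Min b"] bz M
    by auto
  then show ?thesis unfolding dm_def using lt by simp
qed

section \<open>Scenarios\<close>

lemma scen_chain:
  assumes z: "finite z" and s: "s \<in> scenarios z P"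
  shows "i < length s \<Longrightarrow> partition_on z (s ! i) \<and> card (s ! i) + i = card z"
proof (induction i)
  case 0
  have "s \<noteq> []" "hd s = pi0 z" using s unfolding scenarios_def by auto
  then have "s ! 0 = pi0 z" by (simp add: hd_conv_nth)
  then show ?case using pi0_part card_pi0 by simp
next
  case (Suc i)
  then have IH: "partition_on z (s ! i)" "card (s ! i) + i = card z" by auto
  have m: "is_merge (s ! i) (s ! Suc i)" using s Suc.prems unfolding scenarios_def by auto
  show ?case using is_merge_part[OF IH(1) m] is_merge_card[OF z IH(1) m] IH(2) by simp
qed

lemma scen_length:
  assumes z: "finite z" and s: "s \<in> scenarios z P"
  shows "length s + card P = card z + 1"
proof -
  have ne: "s \<noteq> []" "last s = P" using s unfolding scenarios_def by auto
  then have "s ! (length s - 1) = P" by (simp add: last_conv_nth)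
  moreover have "length s - 1 < length s" using ne by simp
  ultimately have "card P + (length s - 1) = card z" using scen_chain[OF z s] by metis
  then show ?thesis using ne by (cases s) auto
qed

lemma scen_parts:
  assumes z: "finite z" and s: "s \<in> scenarios z P"
  shows "set s \<subseteq> partitions_of z"
  using scen_chain[OF z s] by (auto simp: in_set_conv_nth partitions_of_iff)

lemma scen_finite:
  assumes z: "finite z"
  shows "finite (scenarios z P)"
proof -
  have "scenarios z P \<subseteq> {s. set s \<subseteq> partitions_of z \<and> length s = card z + 1 - card P}"
    using scen_parts[OF z] scen_length[OF z] by fastforce
  moreover have "finite {s. set s \<subseteq> partitions_of z \<and> length s = card z + 1 - card P}"
    by (rule finite_lists_length_eq[OF finite_partitions[OF z]])
  ultimately show ?thesis using finite_subset by blast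
qed

lemma scen_pi0:
  assumes z: "finite z"
  shows "scenarios z (pi0 z) = {[pi0 z]}"
proof (intro equalityI subsetI)
  fix s assume s: "s \<in> scenarios z (pi0 z)"
  then have "length s = 1" using scen_length[OF z s] card_pi0 by simp
  moreover have "hd s = pi0 z" using s unfolding scenarios_def by simp
  ultimately show "s \<in> {[pi0 z]}" by (cases s) auto
next
  fix s assume "s \<in> {[pi0 z]}"
  then show "s \<in> scenarios z (pi0 z)" unfolding scenarios_def by auto
qed

lemma energy_single: "energy [x] = 1"
  unfolding energy_def by simp

lemma F_pi0:
  assumes z: "finite z"
  shows "F_fun z (pi0 z) = 1"
  unfolding F_fun_def scen_pi0[OF z] using energy_single by simp

lemma energy_snoc:
  assumes "s \<noteq> []"
  shows "energy (s @ [q]) = energy s * cover_length q"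
proof -
  have "{1..<length (s @ [q])} = insert (length s) {1..<length s}" using assms by (cases s) auto
  then have "energy (s @ [q]) = cover_length ((s @ [q]) ! length s) * (\<Prod>i\<in>{1..<length s}. cover_length ((s @ [q]) ! i))"
    unfolding energy_def by simp
  also have "\<dots> = cover_length q * (\<Prod>i\<in>{1..<length s}. cover_length (s ! i))"
    by (simp add: nth_append)
  finally show ?thesis unfolding energy_def by simp
qed

definition mpreds :: "real set \<Rightarrow> real set set \<Rightarrow> real set set set" where
  "mpreds z q = {r \<in> partitions_of z. is_merge r q}"

lemma scen_snoc:
  assumes s: "s \<in> scenarios z r" and m: "is_merge r q"
  shows "s @ [q] \<in> scenarios z q"
proof -
  have s': "s \<noteq> []" "hd s = pi0 z" "last s = r" "\<forall>i. Suc i < length s \<longrightarrow> is_merge (s ! i) (s ! Suc i)"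
    using s unfolding scenarios_def by auto
  have "\<forall>i. Suc i < length (s @ [q]) \<longrightarrow> is_merge ((s @ [q]) ! i) ((s @ [q]) ! Suc i)"
  proof (intro allI impI)
    fix i assume i: "Suc i < length (s @ [q])"
    show "is_merge ((s @ [q]) ! i) ((s @ [q]) ! Suc i)"
    proof (cases "Suc i < length s")
      case True then show ?thesis using s' by (simp add: nth_append)
    next
      case False
      then have si: "Suc i = length s" using i by simp
      then have "i = length s - 1" by simp
      then have "(s @ [q]) ! i = last s" "(s @ [q]) ! Suc i = q" using s'(1) si
        by (auto simp: nth_append last_conv_nth)
      then show ?thesis using m s' by simp
    qed
  qed
  then show ?thesis using s' unfolding scenarios_def by auto
qed

lemma scen_decomp:
  assumes z: "finite z" and q: "q \<noteq> pi0 z"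
  shows "scenarios z q = (\<lambda>s. s @ [q]) ` (\<Union>r\<in>mpreds z q. scenarios z r)"
proof (intro equalityI subsetI)
  fix s' assume s': "s' \<in> scenarios z q"
  have p: "s' \<noteq> []" "hd s' = pi0 z" "last s' = q" "\<forall>i. Suc i < length s' \<longrightarrow> is_merge (s' ! i) (s' ! Suc i)"
    using s' unfolding scenarios_def by auto
  have l2: "2 \<le> length s'"
  proof (rule ccontr)
    assume "\<not> 2 \<le> length s'"
    then have "length s' < 2" by simp
    moreover have "length s' \<noteq> 0" using p(1) by simp
    ultimately have "length s' = 1" by linarith
    then have "hd s' = last s'" by (cases s') auto
    then show False using p q by simp
  qed
  define s where "s = butlast s'"
  have eq: "s' = s @ [q]" unfolding s_def using p append_butlast_last_id[of s'] by simp
  have sne: "s \<noteq> []" using l2 unfolding s_def by (cases s') auto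
  define r where "r = last s"
  have ls: "length s' = Suc (length s)" using eq by simp
  have chain: "\<forall>i. Suc i < length s \<longrightarrow> is_merge (s ! i) (s ! Suc i)"
  proof (intro allI impI)
    fix i assume i: "Suc i < length s"
    have "is_merge (s' ! i) (s' ! Suc i)" using p(4) i ls by simp
    then show "is_merge (s ! i) (s ! Suc i)" using i unfolding eq by (simp add: nth_append)
  qed
  have hs: "hd s = pi0 z" using p(2) sne unfolding eq by simp
  have sr: "s \<in> scenarios z r" unfolding scenarios_def r_def using sne hs chain by simp
  have "Suc (length s - 1) < length s'" using ls sne by simp
  then have "is_merge (s' ! (length s - 1)) (s' ! Suc (length s - 1))" using p(4) by blast
  then have mr: "is_merge r q" using sne unfolding eq r_def
    by (simp add: nth_append last_conv_nth)
  have "r \<in> partitions_of z"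
    using scen_parts[OF z sr] sne unfolding r_def by auto
  then have "r \<in> mpreds z q" using mr unfolding mpreds_def by simp
  then show "s' \<in> (\<lambda>s. s @ [q]) ` (\<Union>r\<in>mpreds z q. scenarios z r)" using eq sr by blast
next
  fix s' assume "s' \<in> (\<lambda>s. s @ [q]) ` (\<Union>r\<in>mpreds z q. scenarios z r)"
  then obtain r s where "r \<in> mpreds z q" "s \<in> scenarios z r" "s' = s @ [q]" by blast
  then show "s' \<in> scenarios z q" using scen_snoc unfolding mpreds_def by auto
qed

lemma F_rec:
  assumes z: "finite z" and q: "q \<noteq> pi0 z"
  shows "F_fun z q = (\<Sum>r\<in>mpreds z q. F_fun z r) / cover_length q"
proof -
  have fm: "finite (mpreds z q)" unfolding mpreds_def using finite_partitions[OF z] by simp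
  have inj: "inj_on (\<lambda>s. s @ [q]) (\<Union>r\<in>mpreds z q. scenarios z r)" by (auto simp: inj_on_def)
  have "F_fun z q = (\<Sum>s\<in>(\<Union>r\<in>mpreds z q. scenarios z r). 1 / energy (s @ [q]))"
    unfolding F_fun_def scen_decomp[OF z q] using sum.reindex[OF inj] by simp
  also have "\<dots> = (\<Sum>r\<in>mpreds z q. \<Sum>s\<in>scenarios z r. 1 / energy (s @ [q]))"
  proof (rule sum.UNION_disjoint[OF fm])
    show "\<forall>r\<in>mpreds z q. finite (scenarios z r)" using scen_finite[OF z] by simp
    show "\<forall>r\<in>mpreds z q. \<forall>r'\<in>mpreds z q. r \<noteq> r' \<longrightarrow> scenarios z r \<inter> scenarios z r' = {}"
      unfolding scenarios_def by auto
  qed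
  also have "\<dots> = (\<Sum>r\<in>mpreds z q. (\<Sum>s\<in>scenarios z r. 1 / energy s) / cover_length q)"
  proof (intro sum.cong refl)
    fix r assume "r \<in> mpreds z q"
    have "\<And>s. s \<in> scenarios z r \<Longrightarrow> 1 / energy (s @ [q]) = (1 / energy s) / cover_length q"
      using energy_snoc unfolding scenarios_def by auto
    then show "(\<Sum>s\<in>scenarios z r. 1 / energy (s @ [q])) = (\<Sum>s\<in>scenarios z r. 1 / energy s) / cover_length q"
      by (simp add: sum_divide_distrib)
  qed
  also have "\<dots> = (\<Sum>r\<in>mpreds z q. F_fun z r) / cover_length q"
    unfolding F_fun_def by (simp add: sum_divide_distrib)
  finally show ?thesis .
qed

section \<open>Comparison of F with the explicit weight Psi\<close>

definition PsiP :: "real set set \<Rightarrow> real" where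
  "PsiP q = (\<Prod>c\<in>q. psi c)"

lemma PsiP_pos:
  assumes "finite z" "partition_on z q"
  shows "0 < PsiP q"
  unfolding PsiP_def using part_props[OF assms] psi_pos by (intro prod_pos) auto

lemma PsiP_pi0: "PsiP (pi0 z) = 1"
  unfolding PsiP_def pi0_def by (intro prod.neutral) (auto simp: psi_le1)

definition refine1 :: "real set set \<Rightarrow> real set \<Rightarrow> real set \<Rightarrow> real set set" where
  "refine1 q c X = insert X (insert (c - X) (q - {c}))"

lemma refine1_facts:
  assumes z: "finite z" and q: "partition_on z q" and c: "c \<in> q" and X: "X \<subseteq> c" "X \<noteq> {}" "X \<noteq> c"
  shows "X \<notin> q - {c}" "c - X \<notin> q - {c}" "X \<noteq> c - X" "c - X \<noteq> {}"
    "partition_on z (refine1 q c X)" "is_merge (refine1 q c X) q"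
    "PsiP (refine1 q c X) = psi X * psi (c - X) * PsiP (q - {c})"
    "PsiP q = psi c * PsiP (q - {c})"
proof -
  have fq: "finite q" using part_props[OF z q] by simp
  have disjc: "\<And>d. d \<in> q - {c} \<Longrightarrow> d \<inter> c = {}" using part_disj[OF q] c by blast
  have nemp: "\<And>d. d \<in> q \<Longrightarrow> d \<noteq> {}" using part_props[OF z q] by blast
  show n1: "X \<notin> q - {c}" using disjc X by blast
  show n4: "c - X \<noteq> {}" using X by blast
  show n2: "c - X \<notin> q - {c}" using disjc n4 by blast
  show n3: "X \<noteq> c - X" using X by blast
  show "PsiP (refine1 q c X) = psi X * psi (c - X) * PsiP (q - {c})"
    unfolding PsiP_def refine1_def using fq n1 n2 n3 by simp
  show "PsiP q = psi c * PsiP (q - {c})"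
    unfolding PsiP_def using fq c by (simp add: prod.remove)
  have U: "\<Union>(refine1 q c X) = z"
  proof -
    have "\<Union>(refine1 q c X) = c \<union> \<Union>(q - {c})" unfolding refine1_def using X by auto
    also have "\<dots> = \<Union>q" using c by auto
    finally show ?thesis using partition_onD1[OF q] by simp
  qed
  show P: "partition_on z (refine1 q c X)"
  proof (rule partition_onI[OF U])
    fix p p' assume pp: "p \<in> refine1 q c X" "p' \<in> refine1 q c X" "p \<noteq> p'"
    have R: "\<And>c1 c2. c1 \<in> q - {c} \<Longrightarrow> c2 \<in> q - {c} \<Longrightarrow> c1 \<noteq> c2 \<Longrightarrow> c1 \<inter> c2 = {}"
      using part_disj[OF q] by blast
    have A: "\<And>d. d \<in> q - {c} \<Longrightarrow> d \<inter> X = {} \<and> d \<inter> (c - X) = {}" using disjc X by blast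
    have "X \<inter> (c - X) = {}" by blast
    then have "p \<inter> p' = {}" by (rule gen_disj[OF pp[unfolded refine1_def] _ A R])
    then show "disjnt p p'" by (simp add: disjnt_def)
  next
    show "{} \<notin> refine1 q c X" unfolding refine1_def using X n4 nemp by auto
  qed
  have e1: "refine1 q c X - {X, c - X} = q - {c}" unfolding refine1_def using n1 n2 by auto
  have e2: "X \<union> (c - X) = c" using X by blast
  have "merge_blocks (refine1 q c X) X (c - X) = insert c (q - {c})"
    unfolding merge_blocks_def e1 e2 ..
  also have "\<dots> = q" using c by (rule insert_Diff)
  finally have mq: "merge_blocks (refine1 q c X) X (c - X) = q" .
  have Xr: "X \<in> refine1 q c X" "c - X \<in> refine1 q c X" unfolding refine1_def by auto
  show "is_merge (refine1 q c X) q" unfolding is_merge_def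
    using Xr n3 mq by (intro bexI[where x=X] bexI[where x="c - X"]) auto
qed

lemma mpred_form:
  assumes z: "finite z" and q: "partition_on z q" and r: "r \<in> mpreds z q"
  shows "\<exists>c\<in>q. \<exists>X. X \<subseteq> c \<and> X \<noteq> {} \<and> X \<noteq> c \<and> r = refine1 q c X"
proof -
  have rp: "partition_on z r" "is_merge r q" using r unfolding mpreds_def partitions_of_iff by auto
  then obtain b1 b2 where b: "b1 \<in> r" "b2 \<in> r" "b1 \<noteq> b2" "q = merge_blocks r b1 b2"
    unfolding is_merge_def by blast
  define c where "c = b1 \<union> b2"
  have un: "c \<notin> r" using union_notin[OF rp(1) b(1-3)] c_def by simp
  have cq: "c \<in> q" using b(4) unfolding merge_blocks_def c_def by simp
  have dj: "b1 \<inter> b2 = {}" using part_disj[OF rp(1) b(1-3)] .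
  have ne: "b1 \<noteq> {}" "b2 \<noteq> {}" using partition_onD3[OF rp(1)] b by auto
  have "c - b1 = b2" using dj c_def by blast
  moreover have "q - {c} = r - {b1, b2}" using b(4) un unfolding merge_blocks_def c_def by auto
  ultimately have "refine1 q c b1 = r" unfolding refine1_def using b by auto
  moreover have "b1 \<subseteq> c" "b1 \<noteq> c" using c_def dj ne by auto
  ultimately show ?thesis using cq ne by blast
qed

lemma nonpi0_block:
  assumes z: "finite z" and q: "partition_on z q" and ne: "q \<noteq> pi0 z"
  shows "\<exists>c\<in>q. 2 \<le> card c"
proof (rule ccontr)
  assume "\<not> (\<exists>c\<in>q. 2 \<le> card c)"
  moreover have "\<forall>c\<in>q. 1 \<le> card c" using part_props[OF z q] by (auto simp: Suc_leI card_gt_0_iff)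
  ultimately have "\<forall>c\<in>q. card c = 1" by fastforce
  then have "card z = card q" using card_part_sum[OF z q] by simp
  then show False using card_eq_pi0[OF z q] ne by simp
qed

lemma cover_pos:
  assumes z: "finite z" and q: "partition_on z q" and ne: "q \<noteq> pi0 z"
  shows "0 < cover_length q"
proof -
  obtain c where c: "c \<in> q" "2 \<le> card c" using nonpi0_block[OF assms] by blast
  have fq: "finite q" using part_props[OF z q] by simp
  have "dm c \<le> (\<Sum>b\<in>q. dm b)" using fq c dm_nonneg_part[OF z q] by (intro member_le_sum) auto
  moreover have "0 < dm c" using dm_pos part_props[OF z q] c by auto
  ultimately show ?thesis using cover_length_dm[OF z q] by simp
qed

lemma cover_ge_alpha:
  assumes z: "finite z" and q: "partition_on z q" and ne: "q \<noteq> pi0 z"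
  shows "min_dist z \<le> cover_length q"
proof -
  obtain c where c: "c \<in> q" "2 \<le> card c" using nonpi0_block[OF assms] by blast
  have fq: "finite q" using part_props[OF z q] by simp
  have cz: "c \<subseteq> z" using part_props[OF z q] c by blast
  have "card c \<le> card z" using card_mono[OF z cz] .
  then have z2: "2 \<le> card z" using c by simp
  have "dm c \<le> (\<Sum>b\<in>q. dm b)" using fq c dm_nonneg_part[OF z q] by (intro member_le_sum) auto
  moreover have "min_dist z \<le> dm c" using dm_ge_alpha[OF z z2 cz c(2)] .
  ultimately show ?thesis using cover_length_dm[OF z q] by simp
qed

lemma energy_nonneg:
  assumes z: "finite z" and s: "s \<in> scenarios z P"
  shows "0 \<le> energy s"
  unfolding energy_def using scen_chain[OF z s] cover_nonneg[OF z]
  by (intro prod_nonneg) auto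

lemma F_nonneg: "finite z \<Longrightarrow> 0 \<le> F_fun z P"
  unfolding F_fun_def using energy_nonneg by (intro sum_nonneg) simp

lemma mpreds_props:
  assumes z: "finite z" and q: "partition_on z q" and r: "r \<in> mpreds z q"
  shows "partition_on z r" "card r = card q + 1"
  using r is_merge_card[OF z] unfolding mpreds_def partitions_of_iff by auto

lemma mpreds_finite: "finite z \<Longrightarrow> finite (mpreds z q)"
  unfolding mpreds_def using finite_partitions by simp

lemma nonpi0_card_lt:
  assumes z: "finite z" and q: "partition_on z q" and ne: "q \<noteq> pi0 z"
  shows "card q < card z"
  using card_part_le[OF z q] card_eq_pi0[OF z q] ne by fastforce

definition KU :: "nat \<Rightarrow> real" where
  "KU N = 2 ^ N * EE N"

lemma KU_ge1: "1 \<le> KU N"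
proof -
  have "1 * 1 \<le> (2::real) ^ N * EE N" using EE_ge1[of N] by (intro mult_mono) auto
  then show ?thesis unfolding KU_def by simp
qed

lemma sum_mpreds_Psi:
  assumes z: "finite z" and q: "partition_on z q"
  shows "(\<Sum>r\<in>mpreds z q. PsiP r) \<le> KU (card z) * cover_length q * PsiP q"
proof -
  define I where "I = Sigma q (\<lambda>c. {X. X \<subseteq> c \<and> X \<noteq> {} \<and> X \<noteq> c})"
  define f where "f = (\<lambda>(c, X). refine1 q c X)"
  have fq: "finite q" using part_props[OF z q] by simp
  have fI: "finite I" unfolding I_def using fq part_props[OF z q]
    by (intro finite_SigmaI) auto
  have sub: "mpreds z q \<subseteq> f ` I"
  proof
    fix r assume "r \<in> mpreds z q"
    then obtain c X where "c \<in> q" "X \<subseteq> c" "X \<noteq> {}" "X \<noteq> c" "r = refine1 q c X"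
      using mpred_form[OF z q] by blast
    then show "r \<in> f ` I" unfolding f_def I_def by force
  qed
  have pos: "\<And>r. partition_on z r \<Longrightarrow> 0 \<le> PsiP r" using PsiP_pos[OF z] less_imp_le by blast
  have posI: "\<And>i. i \<in> I \<Longrightarrow> 0 \<le> PsiP (f i)"
    unfolding I_def f_def using refine1_facts(5)[OF z q] pos by auto
  have "(\<Sum>r\<in>mpreds z q. PsiP r) \<le> (\<Sum>r\<in>f ` I. PsiP r)"
    using sub fI posI by (intro sum_mono2) auto
  also have "\<dots> \<le> (\<Sum>i\<in>I. PsiP (f i))"
    using sum_image_le[of I PsiP f, OF fI posI] by (simp add: comp_def)
  also have "\<dots> = (\<Sum>c\<in>q. \<Sum>X\<in>{X. X \<subseteq> c \<and> X \<noteq> {} \<and> X \<noteq> c}. PsiP (refine1 q c X))"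
    unfolding I_def f_def using fq part_props[OF z q]
    by (subst sum.Sigma) (auto simp: case_prod_beta intro!: sum.cong)
  also have "\<dots> \<le> (\<Sum>c\<in>q. \<Sum>X\<in>{X. X \<subseteq> c \<and> X \<noteq> {} \<and> X \<noteq> c}. EE (card z) * dm c * PsiP q)"
  proof (intro sum_mono)
    fix c X assume c: "c \<in> q" and X: "X \<in> {X. X \<subseteq> c \<and> X \<noteq> {} \<and> X \<noteq> c}"
    have fc: "finite c" using part_props[OF z q] c by simp
    have X': "X \<subseteq> c" "X \<noteq> {}" "X \<noteq> c" using X by auto
    note rf = refine1_facts[OF z q c X']
    have e: "psi X * psi (c - X) \<le> EE (card c) * dm c * psi c"
      using psi_E[OF fc, of X "c - X"] X' rf(4) by auto
    have cc: "card c \<le> card z" using card_mono[OF z] part_props[OF z q] c by blast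
    have "EE (card c) * dm c * psi c \<le> EE (card z) * dm c * psi c"
      using EE_mono[OF cc] dm_nonneg[OF fc] psi_pos[OF fc] part_props[OF z q] c
      by (intro mult_right_mono) auto
    then have e2: "psi X * psi (c - X) \<le> EE (card z) * dm c * psi c" using e by simp
    have pq: "0 \<le> PsiP (q - {c})" unfolding PsiP_def using psi_pos part_props[OF z q]
      by (intro prod_nonneg) (auto intro: less_imp_le)
    have "PsiP (refine1 q c X) = psi X * psi (c - X) * PsiP (q - {c})" by (rule rf(7))
    also have "\<dots> \<le> EE (card z) * dm c * psi c * PsiP (q - {c})"
      using e2 pq by (rule mult_right_mono)
    also have "\<dots> = EE (card z) * dm c * PsiP q" using rf(8) by simp
    finally show "PsiP (refine1 q c X) \<le> EE (card z) * dm c * PsiP q" .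
  qed
  also have "\<dots> = (\<Sum>c\<in>q. real (card {X. X \<subseteq> c \<and> X \<noteq> {} \<and> X \<noteq> c}) * (EE (card z) * dm c * PsiP q))"
    by simp
  also have "\<dots> \<le> (\<Sum>c\<in>q. 2 ^ card z * (EE (card z) * dm c * PsiP q))"
  proof (intro sum_mono mult_right_mono)
    fix c assume c: "c \<in> q"
    have fc: "finite c" using part_props[OF z q] c by simp
    have "card {X. X \<subseteq> c \<and> X \<noteq> {} \<and> X \<noteq> c} \<le> card (Pow c)"
      using fc by (intro card_mono) auto
    also have "\<dots> = 2 ^ card c" using fc by (simp add: card_Pow)
    also have "\<dots> \<le> 2 ^ card z" using card_mono[OF z] part_props[OF z q] c by (intro power_increasing) auto
    finally have "card {X. X \<subseteq> c \<and> X \<noteq> {} \<and> X \<noteq> c} \<le> (2::nat) ^ card z" .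
    then show "real (card {X. X \<subseteq> c \<and> X \<noteq> {} \<and> X \<noteq> c}) \<le> 2 ^ card z"
      by (metis of_nat_le_iff of_nat_numeral of_nat_power)
    show "0 \<le> EE (card z) * dm c * PsiP q"
      using dm_nonneg_part[OF z q c] PsiP_pos[OF z q] by simp
  qed
  also have "\<dots> = KU (card z) * (\<Sum>c\<in>q. dm c) * PsiP q"
    unfolding KU_def by (simp add: sum_distrib_left sum_distrib_right mult_ac)
  also have "\<dots> = KU (card z) * cover_length q * PsiP q" using cover_length_dm[OF z q] by simp
  finally show ?thesis .
qed

lemma F_upper:
  assumes z: "finite z" and q: "partition_on z q"
  shows "F_fun z q \<le> KU (card z) ^ (card z - card q) * PsiP q"
  using q
proof (induction "card z - card q" arbitrary: q rule: less_induct)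
  case less
  note q = less.prems
  show ?case
  proof (cases "q = pi0 z")
    case True
    then show ?thesis using F_pi0[OF z] PsiP_pi0 card_pi0 by simp
  next
    case False
    have lt: "card q < card z" using nonpi0_card_lt[OF z q False] .
    have Cpos: "0 < cover_length q" using cover_pos[OF z q False] .
    define m where "m = card z - card q"
    have m1: "card z - (card q + 1) = m - 1" "m = Suc (m - 1)" using lt m_def by auto
    have IH: "F_fun z r \<le> KU (card z) ^ (m - 1) * PsiP r" if r: "r \<in> mpreds z q" for r
    proof -
      note rp = mpreds_props[OF z q r]
      have "card z - card r < card z - card q" using rp lt by simp
      then have "F_fun z r \<le> KU (card z) ^ (card z - card r) * PsiP r" using less.hyps rp(1) by blast
      then show ?thesis using rp m1 by simp
    qed
    have "(\<Sum>r\<in>mpreds z q. F_fun z r) \<le> (\<Sum>r\<in>mpreds z q. KU (card z) ^ (m - 1) * PsiP r)"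
      using IH by (intro sum_mono) auto
    also have "\<dots> = KU (card z) ^ (m - 1) * (\<Sum>r\<in>mpreds z q. PsiP r)" by (simp add: sum_distrib_left)
    also have "\<dots> \<le> KU (card z) ^ (m - 1) * (KU (card z) * cover_length q * PsiP q)"
      using sum_mpreds_Psi[OF z q] KU_ge1[of "card z"] by (intro mult_left_mono) auto
    also have "\<dots> = KU (card z) ^ m * PsiP q * cover_length q"
      using m1(2) by (metis (no_types, lifting) mult.assoc mult.commute power_Suc)
    finally have "(\<Sum>r\<in>mpreds z q. F_fun z r) / cover_length q \<le> KU (card z) ^ m * PsiP q"
      using Cpos by (simp add: divide_le_eq)
    then show ?thesis using F_rec[OF z False] m_def by simp
  qed
qed

lemma F_lower:
  assumes z: "finite z" and q: "partition_on z q"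
  shows "(1 / real (card z)) ^ (card z - card q) * PsiP q \<le> F_fun z q"
  using q
proof (induction "card z - card q" arbitrary: q rule: less_induct)
  case less
  note q = less.prems
  show ?case
  proof (cases "q = pi0 z")
    case True
    then show ?thesis using F_pi0[OF z] PsiP_pi0 card_pi0 by simp
  next
    case False
    have lt: "card q < card z" using nonpi0_card_lt[OF z q False] .
    have Cpos: "0 < cover_length q" using cover_pos[OF z q False] .
    have fq: "finite q" "q \<noteq> {}" using part_props[OF z q] Cpos cover_length_def by auto
    define m where "m = card z - card q"
    have m1: "card z - (card q + 1) = m - 1" "m = Suc (m - 1)" using lt m_def by auto
    have "Max (dm ` q) \<in> dm ` q" using fq by (intro Max_in) auto
    then obtain c where c: "c \<in> q" "dm c = Max (dm ` q)" by auto
    have cmax: "\<And>c'. c' \<in> q \<Longrightarrow> dm c' \<le> dm c" using c fq by simp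
    have fc: "finite c" "c \<noteq> {}" using part_props[OF z q] c by auto
    have "cover_length q \<le> real (card q) * dm c"
    proof -
      have "cover_length q = (\<Sum>c'\<in>q. dm c')" using cover_length_dm[OF z q] .
      also have "\<dots> \<le> (\<Sum>c'\<in>q. dm c)" using cmax by (intro sum_mono) auto
      finally show ?thesis by simp
    qed
    also have "\<dots> \<le> real (card z) * dm c"
      using lt dm_nonneg[OF fc] by (intro mult_right_mono) auto
    finally have Cle: "cover_length q \<le> real (card z) * dm c" .
    have dmpos: "0 < dm c"
    proof -
      have "0 < real (card z) * dm c" using Cle Cpos by simp
      then show ?thesis using lt by (simp add: zero_less_mult_iff)
    qed
    have c2: "2 \<le> card c"
    proof (rule ccontr)
      assume "\<not> 2 \<le> card c"
      moreover have "0 < card c" using fc by (simp add: card_gt_0_iff)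
      ultimately have "card c = 1" by simp
      then obtain a where "c = {a}" by (meson card_1_singletonE)
      then show False using dmpos unfolding dm_def by simp
    qed
    obtain x where x: "x \<in> c" "x < Max c"
      and eq: "psi c = psi {w\<in>c. w \<le> x} * psi {w\<in>c. x < w} / dm c"
      using psi_split_ex[OF fc(1) c2] by blast
    define X where "X = {w\<in>c. w \<le> x}"
    have cX: "c - X = {w\<in>c. x < w}" unfolding X_def by auto
    have X': "X \<subseteq> c" "X \<noteq> {}" "X \<noteq> c"
    proof -
      show "X \<subseteq> c" unfolding X_def by auto
      show "X \<noteq> {}" using x unfolding X_def by auto
      have "Max c \<in> c" using fc by simp
      moreover have "Max c \<notin> X" using x unfolding X_def by auto
      ultimately show "X \<noteq> c" by blast
    qed
    note rf = refine1_facts[OF z q c(1) X']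
    define r where "r = refine1 q c X"
    have rm: "r \<in> mpreds z q" unfolding mpreds_def r_def using rf(5,6) partitions_of_iff by auto
    note rp = mpreds_props[OF z q rm]
    have "card z - card r < card z - card q" using rp lt by simp
    then have "(1 / real (card z)) ^ (card z - card r) * PsiP r \<le> F_fun z r"
      using less.hyps rp(1) by blast
    then have IH: "(1 / real (card z)) ^ (m - 1) * PsiP r \<le> F_fun z r"
      using rp(2) m1 by simp
    have Psr: "PsiP r = dm c * PsiP q"
      unfolding r_def rf(7) rf(8) using eq X_def cX dmpos by (simp add: field_simps)
    have "F_fun z r \<le> (\<Sum>r\<in>mpreds z q. F_fun z r)"
      using rm mpreds_finite[OF z] F_nonneg[OF z] by (intro member_le_sum) auto
    then have "F_fun z r / cover_length q \<le> F_fun z q"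
      using F_rec[OF z False] Cpos by (simp add: divide_right_mono)
    moreover have "(1 / real (card z)) ^ m * PsiP q \<le> F_fun z r / cover_length q"
    proof -
      have "(1 / real (card z)) ^ m * PsiP q = (1 / real (card z)) ^ (m - 1) * (PsiP q / real (card z))"
        using m1(2) by (metis (no_types, lifting) divide_inverse inverse_eq_divide mult.assoc mult.commute power_Suc)
      also have "\<dots> \<le> (1 / real (card z)) ^ (m - 1) * (PsiP q * dm c / cover_length q)"
      proof (intro mult_left_mono)
        have "PsiP q / real (card z) = PsiP q * dm c / (real (card z) * dm c)" using dmpos by simp
        also have "\<dots> \<le> PsiP q * dm c / cover_length q"
          using Cle Cpos PsiP_pos[OF z q] dmpos by (intro divide_left_mono) auto
        finally show "PsiP q / real (card z) \<le> PsiP q * dm c / cover_length q" .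
      qed simp
      also have "\<dots> = ((1 / real (card z)) ^ (m - 1) * PsiP r) / cover_length q"
        using Psr by (simp add: mult_ac)
      also have "\<dots> \<le> F_fun z r / cover_length q" using IH Cpos by (intro divide_right_mono) auto
      finally show ?thesis .
    qed
    ultimately show ?thesis using m_def by simp
  qed
qed

definition KS :: "nat \<Rightarrow> real" where
  "KS N = 2 * KU N ^ N * real N ^ N"

lemma split_lemma:
  assumes z: "finite z" and r: "partition_on z r" and se: "split_events r q \<noteq> {}"
    and qne: "q \<noteq> pi0 z"
  shows "min_dist z * cover_length r * F_fun z r \<le> KS (card z) * cover_length q * F_fun z q"
    "card q = card r + 1" "partition_on z q"
proof -
  obtain b x y where e: "(b, x, y) \<in> split_events r q" using se by auto
  then have b: "b \<in> r" and c: "(x, y) \<in> cons b" and qd: "q = split_block r b x y"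
    unfolding split_events_def cons_def by auto
  note lh = split_low_high[OF c]
  define B1 where "B1 = {w\<in>b. w \<le> x}"
  define B2 where "B2 = {w\<in>b. x < w}"
  have B2': "{w\<in>b. y \<le> w} = B2" using lh(6) B2_def by simp
  have qeq: "q = insert B1 (insert B2 (r - {b}))" unfolding qd split_block_def B1_def B2' ..
  have q: "partition_on z q" using split_part[OF r b c] qd by simp
  then show "partition_on z q" .
  show cq: "card q = card r + 1" using card_split[OF z r b c] qd by simp
  have fr: "finite r" using part_props[OF z r] by simp
  have fb: "finite b" "b \<subseteq> z" using part_props[OF z r] b by auto
  have n1: "B1 \<notin> r - {b}" "B2 \<notin> r - {b}" using low_notin[OF r b c] B1_def B2' by auto
  have n3: "B1 \<noteq> B2" using lh(5) B1_def B2' by simp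
  have Psr: "PsiP r = psi b * PsiP (r - {b})" unfolding PsiP_def using fr b by (simp add: prod.remove)
  have Psq: "PsiP q = psi B1 * psi B2 * PsiP (r - {b})"
    unfolding PsiP_def qeq using fr n1 n3 by simp
  have xB1: "x \<in> B1" using lh(3) unfolding B1_def .
  have yB2: "y \<in> B2" using lh(4) unfolding B2' .
  have fB: "finite B1" "finite B2" "B1 \<noteq> {}" "B2 \<noteq> {}"
    using fb(1) xB1 yB2 unfolding B1_def B2_def by auto
  have MB1: "Max B1 = x" unfolding B1_def using lh(7) fb by (intro Max_eqI) auto
  have mB2: "Min B2 = y" unfolding B2'[symmetric] using lh(8) fb by (intro Min_eqI) auto
  define g where "g = y - x"
  have gpos: "0 < g" using lh(9) g_def by simp
  have psib: "psi b \<le> psi B1 * psi B2 / g"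
    using psi_cut[OF fb(1), of x] fB MB1 mB2 g_def unfolding B1_def B2_def by simp
  have pR: "0 \<le> PsiP (r - {b})" unfolding PsiP_def using psi_pos part_props[OF z r]
    by (intro prod_nonneg) (auto intro: less_imp_le)
  have PsiRQ: "PsiP r \<le> PsiP q / g"
  proof -
    have "psi b * PsiP (r - {b}) \<le> (psi B1 * psi B2 / g) * PsiP (r - {b})"
      using psib pR by (rule mult_right_mono)
    then show ?thesis unfolding Psr Psq by simp
  qed
  have dmb: "dm b = dm B1 + g + dm B2"
  proof -
    have "Max b = Max B2"
    proof -
      have "Max b \<in> b" using fb lh by (intro Max_in) auto
      moreover have "x < Max b" using lh fb by (meson Max_ge less_le_trans)
      ultimately have "Max b \<in> B2" unfolding B2_def by simp
      then show ?thesis using fB unfolding B2_def by (intro Max_eqI[symmetric]) (auto simp: fb)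
    qed
    moreover have "Min b = Min B1"
    proof -
      have "Min b \<in> b" using fb lh by (intro Min_in) auto
      moreover have "Min b \<le> x" using lh fb by simp
      ultimately have "Min b \<in> B1" unfolding B1_def by simp
      then show ?thesis using fB unfolding B1_def by (intro Min_eqI[symmetric]) (auto simp: fb)
    qed
    ultimately show ?thesis unfolding dm_def g_def using MB1 mB2 by simp
  qed
  have Crq: "cover_length r = cover_length q + g"
  proof -
    have "cover_length r = dm b + (\<Sum>c\<in>r - {b}. dm c)"
      using cover_length_dm[OF z r] fr b by (simp add: sum.remove)
    moreover have "cover_length q = dm B1 + dm B2 + (\<Sum>c\<in>r - {b}. dm c)"
      using cover_length_dm[OF z q] fr n1 n3 unfolding qeq by simp
    ultimately show ?thesis using dmb by simp
  qed
  have z2: "2 \<le> card z" using card2I[OF z, of x y] lh fb by auto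
  have alpha_g: "min_dist z \<le> g"
    using min_dist_props(2)[OF z z2, of y x] lh fb g_def by auto
  have alpha_C: "min_dist z \<le> cover_length q" using cover_ge_alpha[OF z q qne] .
  have a0: "0 < min_dist z" using min_dist_props(1)[OF z z2] .
  define N where "N = card z"
  define m where "m = card z - card q"
  have cr: "card z - card r = Suc m" using cq card_part_le[OF z q] m_def by simp
  have mN: "m \<le> N" "Suc m \<le> N" using cr N_def m_def by auto
  have N1: "1 \<le> real N" using z2 N_def by simp
  have Fr: "F_fun z r \<le> KU N ^ Suc m * PsiP r" using F_upper[OF z r] cr N_def by simp
  have Fq: "(1 / real N) ^ m * PsiP q \<le> F_fun z q" using F_lower[OF z q] m_def N_def by simp
  have Cr0: "0 \<le> cover_length r" using cover_nonneg[OF z r] .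
  have Cq0: "0 < cover_length q" using cover_pos[OF z q qne] .
  have PQ: "0 < PsiP q" using PsiP_pos[OF z q] .
  have KU1: "1 \<le> KU N" by (rule KU_ge1)
  have "min_dist z * cover_length r * F_fun z r \<le> min_dist z * cover_length r * (KU N ^ Suc m * PsiP r)"
    using Fr a0 Cr0 by (intro mult_left_mono) auto
  also have "\<dots> \<le> min_dist z * cover_length r * (KU N ^ Suc m * (PsiP q / g))"
    using PsiRQ a0 Cr0 KU1 by (intro mult_left_mono) auto
  also have "\<dots> = (min_dist z * (cover_length q + g) / g) * KU N ^ Suc m * PsiP q"
    unfolding Crq by (simp add: field_simps)
  also have "\<dots> \<le> (2 * cover_length q) * KU N ^ Suc m * PsiP q"
  proof -
    have "min_dist z * (cover_length q + g) / g = min_dist z * cover_length q / g + min_dist z"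
      using gpos by (simp add: field_simps)
    also have "\<dots> \<le> cover_length q + cover_length q"
    proof -
      have "min_dist z * cover_length q / g \<le> g * cover_length q / g"
        using alpha_g Cq0 gpos by (intro divide_right_mono mult_right_mono) auto
      then show ?thesis using alpha_C gpos by simp
    qed
    finally show ?thesis using KU1 PQ by (intro mult_right_mono) auto
  qed
  also have "\<dots> = 2 * KU N ^ Suc m * cover_length q * PsiP q" by simp
  also have "\<dots> \<le> 2 * KU N ^ Suc m * cover_length q * (real N ^ m * F_fun z q)"
  proof -
    have "PsiP q \<le> real N ^ m * F_fun z q"
      using Fq N1 by (simp add: power_one_over field_simps)
    then show ?thesis using KU1 Cq0 by (intro mult_left_mono) auto
  qed
  also have "\<dots> \<le> KS N * cover_length q * F_fun z q"
  proof -
    have "KU N ^ Suc m \<le> KU N ^ N" using KU1 mN by (intro power_increasing) auto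
    moreover have "real N ^ m \<le> real N ^ N" using N1 mN by (intro power_increasing) auto
    ultimately have k: "2 * KU N ^ Suc m * real N ^ m \<le> KS N"
    proof -
      assume a: "KU N ^ Suc m \<le> KU N ^ N" "real N ^ m \<le> real N ^ N"
      have "KU N ^ Suc m * real N ^ m \<le> KU N ^ N * real N ^ N"
        using a KU1 N1 by (intro mult_mono) auto
      then show ?thesis unfolding KS_def by simp
    qed
    have cf: "0 \<le> cover_length q * F_fun z q" using Cq0 F_nonneg[OF z, of q] by simp
    have "2 * KU N ^ Suc m * cover_length q * (real N ^ m * F_fun z q)
        = (2 * KU N ^ Suc m * real N ^ m) * (cover_length q * F_fun z q)" by (simp add: mult_ac)
    also have "\<dots> \<le> KS N * (cover_length q * F_fun z q)" using k cf by (rule mult_right_mono)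
    finally show ?thesis by (simp add: mult_ac)
  qed
  finally show "min_dist z * cover_length r * F_fun z r \<le> KS (card z) * cover_length q * F_fun z q"
    using N_def by simp
qed

section \<open>Path sums\<close>

lemma path_prob_snoc: "path_prob p (xs @ [u, v]) = path_prob p (xs @ [u]) * p u v"
proof (induction xs)
  case Nil then show ?case by simp
next
  case (Cons x xs)
  then show ?case by (cases xs) auto
qed

lemma path_prob_nonneg:
  assumes "\<And>x y. 0 \<le> p x y"
  shows "0 \<le> path_prob p xs"
proof (induction xs)
  case Nil then show ?case by simp
next
  case (Cons x xs)
  then show ?case using assms by (cases xs) auto
qed

definition Vp :: "'a set \<Rightarrow> ('a \<Rightarrow> 'a \<Rightarrow> real) \<Rightarrow> 'a \<Rightarrow> nat \<Rightarrow> 'a \<Rightarrow> real" where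
  "Vp S p a m q = (\<Sum>xs\<in>{xs. length xs = m \<and> set xs \<subseteq> S - {a}}. path_prob p (a # xs @ [q]))"

lemma lists_Suc_eq:
  "{xs. length xs = Suc m \<and> set xs \<subseteq> A} = (\<lambda>(ys, r). ys @ [r]) ` ({ys. length ys = m \<and> set ys \<subseteq> A} \<times> A)"
proof (intro equalityI subsetI)
  fix xs assume xs: "xs \<in> {xs. length xs = Suc m \<and> set xs \<subseteq> A}"
  then have "xs \<noteq> []" by auto
  then have "xs = butlast xs @ [last xs]" by simp
  moreover have "length (butlast xs) = m" "set (butlast xs) \<subseteq> A" "last xs \<in> A"
    using xs \<open>xs \<noteq> []\<close> by (auto dest: in_set_butlastD)
  ultimately show "xs \<in> (\<lambda>(ys, r). ys @ [r]) ` ({ys. length ys = m \<and> set ys \<subseteq> A} \<times> A)"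
    by (intro image_eqI[where x="(butlast xs, last xs)"]) auto
qed auto

lemma Vp_Suc:
  assumes fS: "finite S"
  shows "Vp S p a (Suc m) q = (\<Sum>r\<in>S - {a}. Vp S p a m r * p r q)"
proof -
  define A where "A = S - {a}"
  define L where "L = {ys. length ys = m \<and> set ys \<subseteq> A}"
  have fA: "finite A" using fS A_def by simp
  have fL: "finite L" unfolding L_def using finite_lists_length_eq[OF fA] by (simp add: conj_commute)
  have inj: "inj_on (\<lambda>(ys, r). ys @ [r]) (L \<times> A)" by (auto simp: inj_on_def)
  have "Vp S p a (Suc m) q = (\<Sum>xs\<in>(\<lambda>(ys, r). ys @ [r]) ` (L \<times> A). path_prob p (a # xs @ [q]))"
    unfolding Vp_def A_def[symmetric] L_def lists_Suc_eq ..
  also have "\<dots> = (\<Sum>(ys, r)\<in>L \<times> A. path_prob p (a # (ys @ [r]) @ [q]))"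
    by (subst sum.reindex[OF inj]) (simp add: case_prod_beta comp_def)
  also have "\<dots> = (\<Sum>(ys, r)\<in>L \<times> A. path_prob p (a # ys @ [r]) * p r q)"
  proof (intro sum.cong refl)
    fix e assume "e \<in> L \<times> A"
    obtain ys r where e: "e = (ys, r)" by (cases e)
    have "a # (ys @ [r]) @ [q] = (a # ys) @ [r, q]" by simp
    then show "(case e of (ys, r) \<Rightarrow> path_prob p (a # (ys @ [r]) @ [q])) = (case e of (ys, r) \<Rightarrow> path_prob p (a # ys @ [r]) * p r q)"
      unfolding e using path_prob_snoc[of p "a # ys" r q] by simp
  qed
  also have "\<dots> = (\<Sum>r\<in>A. \<Sum>ys\<in>L. path_prob p (a # ys @ [r]) * p r q)"
    by (simp add: sum.cartesian_product[symmetric] sum.swap[of _ A L])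
  also have "\<dots> = (\<Sum>r\<in>A. Vp S p a m r * p r q)"
    unfolding Vp_def A_def[symmetric] L_def[symmetric] by (simp add: sum_distrib_right)
  finally show ?thesis unfolding A_def .
qed

lemma Vp_0: "Vp S p a 0 q = p a q"
proof -
  have "{xs. length xs = 0 \<and> set xs \<subseteq> S - {a}} = {[]}" by auto
  then show ?thesis unfolding Vp_def by simp
qed

lemma Vp_nonneg: "(\<And>x y. 0 \<le> p x y) \<Longrightarrow> 0 \<le> Vp S p a m q"
  unfolding Vp_def by (intro sum_nonneg path_prob_nonneg) auto

lemma super_bound:
  assumes fS: "finite S" and pn: "\<And>x y. 0 \<le> p x y"
    and H0: "\<And>q. q \<in> S - {a} \<Longrightarrow> 0 \<le> H q"
    and sup: "\<And>q. q \<in> S - {a} \<Longrightarrow> p a q + (\<Sum>r\<in>S - {a}. H r * p r q) \<le> H q"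
  shows "q \<in> S - {a} \<Longrightarrow> (\<Sum>m<M. Vp S p a m q) \<le> H q"
proof (induction M arbitrary: q)
  case 0 then show ?case using H0 by simp
next
  case (Suc M)
  have "(\<Sum>m<Suc M. Vp S p a m q) = Vp S p a 0 q + (\<Sum>m<M. Vp S p a (Suc m) q)"
    by (rule sum.lessThan_Suc_shift)
  also have "\<dots> = p a q + (\<Sum>m<M. \<Sum>r\<in>S - {a}. Vp S p a m r * p r q)"
    using Vp_Suc[OF fS] Vp_0 by simp
  also have "\<dots> = p a q + (\<Sum>r\<in>S - {a}. (\<Sum>m<M. Vp S p a m r) * p r q)"
    by (subst sum.swap) (simp add: sum_distrib_right)
  also have "\<dots> \<le> p a q + (\<Sum>r\<in>S - {a}. H r * p r q)"
    using Suc.IH pn by (intro add_left_mono sum_mono mult_right_mono) auto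
  also have "\<dots> \<le> H q" using sup Suc.prems by simp
  finally show ?case .
qed

definition hterm :: "'a set \<Rightarrow> ('a \<Rightarrow> 'a \<Rightarrow> real) \<Rightarrow> 'a \<Rightarrow> 'a \<Rightarrow> nat \<Rightarrow> real" where
  "hterm S p a b m = (\<Sum>xs\<in>{xs. length xs = m \<and> set xs \<subseteq> S - {a, b}}. path_prob p (a # xs @ [b]))"

lemma hterm_nonneg: "(\<And>x y. 0 \<le> p x y) \<Longrightarrow> 0 \<le> hterm S p a b m"
  unfolding hterm_def by (intro sum_nonneg path_prob_nonneg) auto

lemma hterm_le_Vp:
  assumes fS: "finite S" and pn: "\<And>x y. 0 \<le> p x y"
  shows "hterm S p a b m \<le> Vp S p a m b"
  unfolding hterm_def Vp_def
proof (rule sum_mono2)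
  have "finite (S - {a})" using fS by simp
  then show "finite {xs. length xs = m \<and> set xs \<subseteq> S - {a}}"
    using finite_lists_length_eq[of "S - {a}" m] by (simp add: conj_commute)
  show "{xs. length xs = m \<and> set xs \<subseteq> S - {a, b}} \<subseteq> {xs. length xs = m \<and> set xs \<subseteq> S - {a}}" by auto
  show "\<And>xs. xs \<in> {xs. length xs = m \<and> set xs \<subseteq> S - {a}} - {xs. length xs = m \<and> set xs \<subseteq> S - {a, b}} \<Longrightarrow>
      0 \<le> path_prob p (a # xs @ [b])" using path_prob_nonneg pn by blast
qed

lemma hit_upper:
  assumes fS: "finite S" and pn: "\<And>x y. 0 \<le> p x y"
    and H0: "\<And>q. q \<in> S - {a} \<Longrightarrow> 0 \<le> H q"
    and sup: "\<And>q. q \<in> S - {a} \<Longrightarrow> p a q + (\<Sum>r\<in>S - {a}. H r * p r q) \<le> H q"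
    and b: "b \<in> S - {a}"
  shows "summable (hterm S p a b)" "hit_before_return S p a b \<le> H b"
proof -
  have bd: "(\<Sum>m<M. hterm S p a b m) \<le> H b" for M
  proof -
    have "(\<Sum>m<M. hterm S p a b m) \<le> (\<Sum>m<M. Vp S p a m b)"
      using hterm_le_Vp[OF fS pn] by (intro sum_mono) auto
    also have "\<dots> \<le> H b" using super_bound[OF fS pn H0 sup b] .
    finally show ?thesis .
  qed
  show sm: "summable (hterm S p a b)"
    using bd hterm_nonneg[OF pn] by (intro summableI_nonneg_bounded) auto
  have "hit_before_return S p a b = suminf (hterm S p a b)"
    unfolding hit_before_return_def hterm_def ..
  also have "\<dots> \<le> H b" using suminf_le_const[OF sm bd] .
  finally show "hit_before_return S p a b \<le> H b" .
qed

lemma hit_lower: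
  assumes sm: "summable (hterm S p a b)" and pn: "\<And>x y. 0 \<le> p x y"
  shows "hterm S p a b m \<le> hit_before_return S p a b"
proof -
  have "hterm S p a b m = (\<Sum>i\<in>{m}. hterm S p a b i)" by simp
  also have "\<dots> \<le> suminf (hterm S p a b)"
    using sm hterm_nonneg[OF pn] by (intro sum_le_suminf) auto
  finally show ?thesis unfolding hit_before_return_def hterm_def .
qed

definition tt :: "real set \<Rightarrow> real \<Rightarrow> real set set \<Rightarrow> real" where
  "tt z \<rho> Q = cover_length Q * F_fun z Q / (\<rho> ^ (card z - card Q - 1) * gamma0 (card z - 1))"

definition HH :: "real set \<Rightarrow> real \<Rightarrow> real \<Rightarrow> real set set \<Rightarrow> real" where
  "HH z \<rho> \<delta> Q = (1 + \<delta>) ^ (card z - card Q) * tt z \<rho> Q"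

lemma KS_nonneg: "0 \<le> KS N"
proof -
  have "0 \<le> KU N" using KU_ge1[of N] by linarith
  then show ?thesis unfolding KS_def by simp
qed

lemma gamma0_choose: "gamma0 (N - 1) = real (N choose 2)"
proof (cases N)
  case 0 then show ?thesis by (simp add: gamma0_def)
next
  case (Suc n)
  have "2 * (Suc n choose 2) = Suc n * n" unfolding choose_two by simp
  then have "real (2 * (Suc n choose 2)) = real (Suc n * n)" by simp
  then have "2 * real (Suc n choose 2) = (real n + 1) * real n" by (simp add: algebra_simps)
  then show ?thesis unfolding gamma0_def Suc by (simp add: field_simps)
qed

context
  fixes z :: "real set" and \<rho> :: real
  assumes z: "finite z" and rho: "0 < \<rho>" and z2: "2 \<le> card z"
begin

abbreviation "S \<equiv> partitions_of z"
abbreviation "gam \<equiv> gamma0 (card z - 1)"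
abbreviation "p \<equiv> arg_jump z \<rho>"

lemma gam_pos: "0 < gam"
proof -
  have "0 < card z choose 2" using z2 by (simp add: zero_less_binomial_iff)
  then show ?thesis unfolding gamma0_choose by simp
qed

lemma p_nonneg: "0 \<le> p r q" using jump_nonneg rho by (simp add: less_imp_le)

lemma T_pi0: "arg_total_rate z \<rho> (pi0 z) = gam"
proof -
  have "cover_length (pi0 z) = 0" unfolding cover_length_def pi0_def by (auto intro!: sum.neutral)
  then show ?thesis using total_rate[OF z pi0_in] card_pi0 gamma0_choose by simp
qed

lemma T_lower:
  assumes r: "r \<in> S"
  shows "\<rho> * cover_length r \<le> arg_total_rate z \<rho> r"
  using total_rate[OF z r] by simp

lemma T_upper:
  assumes r: "r \<in> S"
  shows "arg_total_rate z \<rho> r \<le> gam + \<rho> * cover_length r"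
proof -
  have "card r \<le> card z" using card_part_le[OF z] r partitions_of_iff by blast
  then have "card r choose 2 \<le> card z choose 2" by (rule binomial_right_mono)
  then show ?thesis using total_rate[OF z r] gamma0_choose by simp
qed

lemma jump_merge:
  assumes r: "r \<in> S" and m: "is_merge r q"
  shows "p r q = 1 / arg_total_rate z \<rho> r"
proof -
  have P: "partition_on z r" using r partitions_of_iff by blast
  have "card q + 1 = card r" using is_merge_card[OF z P m] .
  then have "q \<noteq> r" by auto
  then show ?thesis unfolding arg_jump_def using merge_rate[OF z P m] by simp
qed

lemma jump_cases:
  assumes "p r q \<noteq> 0"
  shows "is_merge r q \<or> split_events r q \<noteq> {}"
proof -
  have "arg_rate \<rho> r q \<noteq> 0" using assms unfolding arg_jump_def by (auto split: if_splits)
  then show ?thesis by (rule rate_cases)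
qed

lemma tt_pos:
  assumes q: "q \<in> S" "q \<noteq> pi0 z"
  shows "0 < tt z \<rho> q"
proof -
  have P: "partition_on z q" using q partitions_of_iff by blast
  have "0 < cover_length q" using cover_pos[OF z P q(2)] .
  moreover have "0 < F_fun z q"
    using F_lower[OF z P] PsiP_pos[OF z P] z2
    by (smt (verit, best) divide_pos_pos mult_pos_pos of_nat_0_less_iff zero_less_power order_less_le_trans
        not_numeral_le_zero not_one_le_zero of_nat_le_0_iff zero_less_one)
  ultimately show ?thesis unfolding tt_def using rho gam_pos by simp
qed

lemma tt_nonneg: "q \<in> S \<Longrightarrow> 0 \<le> tt z \<rho> q"
  unfolding tt_def using cover_nonneg[OF z] F_nonneg[OF z] rho gam_pos partitions_of_iff
  by (intro divide_nonneg_pos mult_nonneg_nonneg) auto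

lemma mpreds_lev:
  assumes q: "q \<in> S" and r: "r \<in> mpreds z q"
  shows "card r = card q + 1" "r \<in> S"
  using mpreds_props[OF z _ r] q r partitions_of_iff unfolding mpreds_def by auto

lemma tt_rec:
  assumes q: "q \<in> S" "q \<noteq> pi0 z"
  shows "(\<Sum>r\<in>mpreds z q - {pi0 z}. tt z \<rho> r / (\<rho> * cover_length r))
          + (if pi0 z \<in> mpreds z q then 1 / gam else 0) = tt z \<rho> q"
proof -
  have P: "partition_on z q" using q partitions_of_iff by blast
  define l where "l = card z - card q"
  have lt: "card q < card z" using nonpi0_card_lt[OF z P q(2)] .
  have Cq: "0 < cover_length q" using cover_pos[OF z P q(2)] .
  have CF: "cover_length q * F_fun z q = (\<Sum>r\<in>mpreds z q. F_fun z r)"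
    using F_rec[OF z q(2)] Cq by simp
  have fm: "finite (mpreds z q)" using mpreds_finite[OF z] .
  have trm: "tt z \<rho> r / (\<rho> * cover_length r) = F_fun z r / (\<rho> ^ (l - 1) * gam)"
    if r: "r \<in> mpreds z q - {pi0 z}" for r
  proof -
    have rl: "card r = card q + 1" "r \<in> S" using mpreds_lev[OF q(1)] r by auto
    have rP: "partition_on z r" using rl partitions_of_iff by blast
    have Cr: "0 < cover_length r" using cover_pos[OF z rP] r by auto
    have "card r < card z" using nonpi0_card_lt[OF z rP] r by auto
    then have e: "card z - card r - 1 + 1 = l - 1" using rl l_def by simp
    have "tt z \<rho> r / (\<rho> * cover_length r) = F_fun z r / (\<rho> ^ (card z - card r - 1) * \<rho> * gam)"
      unfolding tt_def using Cr rho by (simp add: field_simps)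
    also have "\<rho> ^ (card z - card r - 1) * \<rho> = \<rho> ^ (l - 1)"
      using e by (metis power_Suc2 Suc_eq_plus1)
    finally show ?thesis by (simp add: mult_ac)
  qed
  have pi0term: "(if pi0 z \<in> mpreds z q then 1 / gam else 0)
      = (if pi0 z \<in> mpreds z q then F_fun z (pi0 z) / (\<rho> ^ (l - 1) * gam) else 0)"
  proof (cases "pi0 z \<in> mpreds z q")
    case True
    have "card (pi0 z) = card q + 1" using mpreds_lev[OF q(1) True] by simp
    then have "l - 1 = 0" using card_pi0 l_def by simp
    then show ?thesis using True F_pi0[OF z] by simp
  qed simp
  have "(\<Sum>r\<in>mpreds z q - {pi0 z}. tt z \<rho> r / (\<rho> * cover_length r))
        + (if pi0 z \<in> mpreds z q then 1 / gam else 0)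
      = (\<Sum>r\<in>mpreds z q - {pi0 z}. F_fun z r / (\<rho> ^ (l - 1) * gam))
        + (if pi0 z \<in> mpreds z q then F_fun z (pi0 z) / (\<rho> ^ (l - 1) * gam) else 0)"
    using trm pi0term by simp
  also have "\<dots> = (\<Sum>r\<in>mpreds z q. F_fun z r / (\<rho> ^ (l - 1) * gam))"
  proof (cases "pi0 z \<in> mpreds z q")
    case True
    then show ?thesis using fm by (simp add: sum.remove)
  next
    case False then show ?thesis by simp
  qed
  also have "\<dots> = cover_length q * F_fun z q / (\<rho> ^ (l - 1) * gam)"
    unfolding CF by (simp add: sum_divide_distrib)
  also have "\<dots> = tt z \<rho> q" unfolding tt_def l_def by simp
  finally show ?thesis .
qed

lemma tt_split:
  assumes r: "r \<in> S" and se: "split_events r q \<noteq> {}" and q: "q \<in> S" "q \<noteq> pi0 z"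
  shows "tt z \<rho> r \<le> KS (card z) / (min_dist z * \<rho>) * tt z \<rho> q"
    "card r + 1 = card q"
proof -
  have rP: "partition_on z r" using r partitions_of_iff by blast
  have qP: "partition_on z q" using q partitions_of_iff by blast
  note sl = split_lemma[OF z rP se q(2)]
  show cr: "card r + 1 = card q" using sl(2) by simp
  have lt: "card q < card z" using nonpi0_card_lt[OF z qP q(2)] .
  define l where "l = card z - card q"
  have l1: "1 \<le> l" using lt l_def by simp
  have er: "card z - card r - 1 = l" using cr lt l_def by simp
  have eq: "card z - card q - 1 = l - 1" using l_def by simp
  have a0: "0 < min_dist z" using min_dist_props(1)[OF z z2] .
  have "tt z \<rho> r = cover_length r * F_fun z r / (\<rho> ^ l * gam)"
    unfolding tt_def er ..
  also have "\<dots> = (min_dist z * cover_length r * F_fun z r) / (min_dist z * \<rho> ^ l * gam)"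
    using a0 by simp
  also have "\<dots> \<le> (KS (card z) * cover_length q * F_fun z q) / (min_dist z * \<rho> ^ l * gam)"
    using sl(1) a0 rho gam_pos by (intro divide_right_mono) auto
  also have "\<dots> = KS (card z) / (min_dist z * \<rho>) * (cover_length q * F_fun z q / (\<rho> ^ (l - 1) * gam))"
  proof -
    have "\<rho> ^ l = \<rho> * \<rho> ^ (l - 1)" using l1 by (metis Suc_diff_le diff_Suc_1 power_Suc)
    then show ?thesis using a0 rho gam_pos by (simp add: field_simps)
  qed
  also have "\<dots> = KS (card z) / (min_dist z * \<rho>) * tt z \<rho> q" unfolding tt_def eq ..
  finally show "tt z \<rho> r \<le> KS (card z) / (min_dist z * \<rho>) * tt z \<rho> q" .
qed

lemma HH_nonneg: "r \<in> S \<Longrightarrow> 0 \<le> \<delta> \<Longrightarrow> 0 \<le> HH z \<rho> \<delta> r"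
  unfolding HH_def using tt_nonneg by simp

lemma supersol:
  assumes d: "0 < \<delta>" "\<delta> \<le> 1"
    and dx: "4 * real (card S) * KS (card z) \<le> \<delta> * (min_dist z * \<rho>)"
    and q: "q \<in> S" "q \<noteq> pi0 z"
  shows "p (pi0 z) q + (\<Sum>r\<in>S - {pi0 z}. HH z \<rho> \<delta> r * p r q) \<le> HH z \<rho> \<delta> q"
proof -
  define l where "l = card z - card q"
  define x where "x = min_dist z * \<rho>"
  have qP: "partition_on z q" using q partitions_of_iff by blast
  have lt: "card q < card z" using nonpi0_card_lt[OF z qP q(2)] .
  have l1: "1 \<le> l" using lt l_def by simp
  have a0: "0 < min_dist z" using min_dist_props(1)[OF z z2] .
  have x0: "0 < x" using a0 rho x_def by simp
  have fS: "finite S" using finite_partitions[OF z] .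
  have tq: "0 \<le> tt z \<rho> q" using tt_nonneg q by simp
  have d1: "1 \<le> (1 + \<delta>) ^ (l - 1)" using d by simp
    define Mg where "Mg r = (if is_merge r q then HH z \<rho> \<delta> r * p r q else 0)" for r
  define Sp where "Sp r = (if split_events r q \<noteq> {} then HH z \<rho> \<delta> r * p r q else 0)" for r
  have dec: "HH z \<rho> \<delta> r * p r q \<le> Mg r + Sp r" if r: "r \<in> S - {pi0 z}" for r
  proof -
    have h0: "0 \<le> HH z \<rho> \<delta> r * p r q" using HH_nonneg[of r \<delta>] r d p_nonneg by simp
    show ?thesis
    proof (cases "p r q = 0")
      case True then show ?thesis unfolding Mg_def Sp_def using h0 by auto
    next
      case False
      then have "is_merge r q \<or> split_events r q \<noteq> {}" by (rule jump_cases)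
      then show ?thesis unfolding Mg_def Sp_def using h0 by auto
    qed
  qed
    have Mg_eq: "(\<Sum>r\<in>S - {pi0 z}. Mg r) = (\<Sum>r\<in>mpreds z q - {pi0 z}. HH z \<rho> \<delta> r * p r q)"
  proof -
    have "(\<Sum>r\<in>S - {pi0 z}. Mg r) = (\<Sum>r\<in>{r \<in> S - {pi0 z}. is_merge r q}. HH z \<rho> \<delta> r * p r q)"
      unfolding Mg_def using fS by (intro sum.inter_filter[symmetric]) auto
    also have "{r \<in> S - {pi0 z}. is_merge r q} = mpreds z q - {pi0 z}" unfolding mpreds_def by auto
    finally show ?thesis .
  qed
  have Mg_le: "HH z \<rho> \<delta> r * p r q \<le> (1 + \<delta>) ^ (l - 1) * (tt z \<rho> r / (\<rho> * cover_length r))"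
    if r: "r \<in> mpreds z q - {pi0 z}" for r
  proof -
    have rl: "card r = card q + 1" "r \<in> S" using mpreds_lev[OF q(1)] r by auto
    have rm: "is_merge r q" using r unfolding mpreds_def by simp
    have rP: "partition_on z r" using rl partitions_of_iff by blast
    have Cr: "0 < cover_length r" using cover_pos[OF z rP] r by auto
    have e: "card z - card r = l - 1" using rl l_def by simp
    have pr: "p r q = 1 / arg_total_rate z \<rho> r" using jump_merge[OF rl(2) rm] .
    have "1 / arg_total_rate z \<rho> r \<le> 1 / (\<rho> * cover_length r)"
    proof (rule divide_left_mono)
      show "\<rho> * cover_length r \<le> arg_total_rate z \<rho> r" using T_lower[OF rl(2)] .
      have "0 < \<rho> * cover_length r" using Cr rho by simp
      moreover have "0 < arg_total_rate z \<rho> r" using calculation T_lower[OF rl(2)] by linarith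
      ultimately show "0 < arg_total_rate z \<rho> r * (\<rho> * cover_length r)" by simp
    qed simp
    then have "p r q \<le> 1 / (\<rho> * cover_length r)" using pr by simp
    then have "HH z \<rho> \<delta> r * p r q \<le> HH z \<rho> \<delta> r * (1 / (\<rho> * cover_length r))"
      using HH_nonneg[OF rl(2), of \<delta>] d by (intro mult_left_mono) auto
    then show ?thesis unfolding HH_def e by simp
  qed
  have p0: "p (pi0 z) q \<le> (if pi0 z \<in> mpreds z q then 1 / gam else 0)"
  proof (cases "is_merge (pi0 z) q")
    case True
    then have "pi0 z \<in> mpreds z q" unfolding mpreds_def using pi0_in by simp
    moreover have "p (pi0 z) q = 1 / gam" using jump_merge[OF pi0_in True] T_pi0 by simp
    ultimately show ?thesis by simp
  next
    case False
    have "p (pi0 z) q = 0"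
    proof (rule ccontr)
      assume "p (pi0 z) q \<noteq> 0"
      then have "is_merge (pi0 z) q \<or> split_events (pi0 z) q \<noteq> {}" by (rule jump_cases)
      then show False using False pi0_no_split by simp
    qed
    moreover have "pi0 z \<notin> mpreds z q" using False unfolding mpreds_def by simp
    ultimately show ?thesis by simp
  qed
  have part1: "p (pi0 z) q + (\<Sum>r\<in>S - {pi0 z}. Mg r) \<le> (1 + \<delta>) ^ (l - 1) * tt z \<rho> q"
  proof -
    have "(\<Sum>r\<in>S - {pi0 z}. Mg r) \<le> (\<Sum>r\<in>mpreds z q - {pi0 z}. (1 + \<delta>) ^ (l - 1) * (tt z \<rho> r / (\<rho> * cover_length r)))"
      unfolding Mg_eq using Mg_le by (intro sum_mono) auto
    also have "\<dots> = (1 + \<delta>) ^ (l - 1) * (\<Sum>r\<in>mpreds z q - {pi0 z}. tt z \<rho> r / (\<rho> * cover_length r))"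
      by (simp add: sum_distrib_left)
    finally have A: "(\<Sum>r\<in>S - {pi0 z}. Mg r) \<le> (1 + \<delta>) ^ (l - 1) * (\<Sum>r\<in>mpreds z q - {pi0 z}. tt z \<rho> r / (\<rho> * cover_length r))" .
    have B: "(if pi0 z \<in> mpreds z q then 1 / gam else 0) \<le> (1 + \<delta>) ^ (l - 1) * (if pi0 z \<in> mpreds z q then 1 / gam else 0)"
      using d1 gam_pos by (simp add: divide_right_mono)
    have "p (pi0 z) q + (\<Sum>r\<in>S - {pi0 z}. Mg r) \<le> (1 + \<delta>) ^ (l - 1) * ((\<Sum>r\<in>mpreds z q - {pi0 z}. tt z \<rho> r / (\<rho> * cover_length r)) + (if pi0 z \<in> mpreds z q then 1 / gam else 0))"
      using A B p0 by (simp add: distrib_left)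
    also have "\<dots> = (1 + \<delta>) ^ (l - 1) * tt z \<rho> q" using tt_rec[OF q] by simp
    finally show ?thesis .
  qed
    have Sp_le: "Sp r \<le> (1 + \<delta>) ^ (l + 1) * (KS (card z) / x * tt z \<rho> q)" if r: "r \<in> S - {pi0 z}" for r
  proof (cases "split_events r q \<noteq> {}")
    case True
    have rS: "r \<in> S" using r by simp
    note ts = tt_split[OF rS True q]
    have e: "card z - card r = l + 1" using ts(2) lt l_def by simp
    have "HH z \<rho> \<delta> r * p r q \<le> HH z \<rho> \<delta> r"
      using HH_nonneg[OF rS, of \<delta>] d jump_le1[OF z q(1), of \<rho> r] rho
      by (simp add: mult_left_le)
    also have "\<dots> = (1 + \<delta>) ^ (l + 1) * tt z \<rho> r" unfolding HH_def e ..
    also have "\<dots> \<le> (1 + \<delta>) ^ (l + 1) * (KS (card z) / x * tt z \<rho> q)"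
      using ts(1) d x_def by (intro mult_left_mono) auto
    finally show ?thesis unfolding Sp_def using True by simp
  next
    case False
    have "0 \<le> KS (card z) / x * tt z \<rho> q"
    proof -
      have "0 \<le> KS (card z)" by (rule KS_nonneg)
      then show ?thesis using x0 tq by simp
    qed
    moreover have "0 \<le> (1 + \<delta>) ^ (l + 1)" using d by simp
    ultimately have "0 \<le> (1 + \<delta>) ^ (l + 1) * (KS (card z) / x * tt z \<rho> q)" by (rule mult_nonneg_nonneg[rotated])
    then show ?thesis unfolding Sp_def using False by simp
  qed
  have part2: "(\<Sum>r\<in>S - {pi0 z}. Sp r) \<le> \<delta> * (1 + \<delta>) ^ (l - 1) * tt z \<rho> q"
  proof -
    have "(\<Sum>r\<in>S - {pi0 z}. Sp r) \<le> (\<Sum>r\<in>S - {pi0 z}. (1 + \<delta>) ^ (l + 1) * (KS (card z) / x * tt z \<rho> q))"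
      using Sp_le by (intro sum_mono) auto
    also have "\<dots> = real (card (S - {pi0 z})) * ((1 + \<delta>) ^ (l + 1) * (KS (card z) / x * tt z \<rho> q))"
      by simp
    also have "\<dots> \<le> real (card S) * ((1 + \<delta>) ^ (l + 1) * (KS (card z) / x * tt z \<rho> q))"
    proof (intro mult_right_mono)
      show "real (card (S - {pi0 z})) \<le> real (card S)" using fS by (simp add: card_mono)
      have "0 \<le> KS (card z)" by (rule KS_nonneg)
      then show "0 \<le> (1 + \<delta>) ^ (l + 1) * (KS (card z) / x * tt z \<rho> q)" using x0 tq d by simp
    qed
    also have "\<dots> = ((1 + \<delta>) ^ 2 * (real (card S) * KS (card z) / x)) * ((1 + \<delta>) ^ (l - 1) * tt z \<rho> q)"
    proof -
      have "(1 + \<delta>) ^ (l + 1) = (1 + \<delta>) ^ 2 * (1 + \<delta>) ^ (l - 1)"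
        using l1 by (simp add: power_add[symmetric])
      then show ?thesis by (simp add: field_simps)
    qed
    also have "\<dots> \<le> \<delta> * ((1 + \<delta>) ^ (l - 1) * tt z \<rho> q)"
    proof (rule mult_right_mono)
      have "(1 + \<delta>) * (1 + \<delta>) \<le> 2 * 2" using d by (intro mult_mono) auto
      then have "(1 + \<delta>) ^ 2 \<le> 4" by (simp add: power2_eq_square)
      moreover have "real (card S) * KS (card z) / x \<le> \<delta> / 4"
        using dx x0 x_def by (simp add: field_simps)
      moreover have "0 \<le> real (card S) * KS (card z) / x"
      proof -
        have "0 \<le> KS (card z)" by (rule KS_nonneg)
        then show ?thesis using x0 by simp
      qed
      ultimately have "(1 + \<delta>) ^ 2 * (real (card S) * KS (card z) / x) \<le> 4 * (\<delta> / 4)"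
        by (intro mult_mono) auto
      then show "(1 + \<delta>) ^ 2 * (real (card S) * KS (card z) / x) \<le> \<delta>" by simp
      show "0 \<le> (1 + \<delta>) ^ (l - 1) * tt z \<rho> q" using tq d by simp
    qed
    finally show ?thesis by (simp add: mult_ac)
  qed
  have "p (pi0 z) q + (\<Sum>r\<in>S - {pi0 z}. HH z \<rho> \<delta> r * p r q)
      \<le> p (pi0 z) q + (\<Sum>r\<in>S - {pi0 z}. Mg r + Sp r)"
    using dec by (intro add_left_mono sum_mono) auto
  also have "\<dots> = (p (pi0 z) q + (\<Sum>r\<in>S - {pi0 z}. Mg r)) + (\<Sum>r\<in>S - {pi0 z}. Sp r)"
    by (simp add: sum.distrib)
  also have "\<dots> \<le> (1 + \<delta>) ^ (l - 1) * tt z \<rho> q + \<delta> * (1 + \<delta>) ^ (l - 1) * tt z \<rho> q"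
    using part1 part2 by simp
  also have "\<dots> = (1 + \<delta>) ^ Suc (l - 1) * tt z \<rho> q" by (simp add: algebra_simps)
  also have "\<dots> = HH z \<rho> \<delta> q"
  proof -
    have "Suc (l - 1) = card z - card q" using l1 l_def by simp
    then show ?thesis unfolding HH_def by simp
  qed
  finally show ?thesis .
qed

lemma hit_upper_bound:
  assumes d: "0 < \<delta>" "\<delta> \<le> 1"
    and dx: "4 * real (card S) * KS (card z) \<le> \<delta> * (min_dist z * \<rho>)"
    and P: "P \<in> S" "P \<noteq> pi0 z"
  shows "arg_hit_prob z \<rho> P \<le> HH z \<rho> \<delta> P" "summable (hterm S p (pi0 z) P)"
proof -
  have fS: "finite S" using finite_partitions[OF z] .
  have H0: "\<And>q. q \<in> S - {pi0 z} \<Longrightarrow> 0 \<le> HH z \<rho> \<delta> q" using HH_nonneg d by auto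
  have sup: "\<And>q. q \<in> S - {pi0 z} \<Longrightarrow> p (pi0 z) q + (\<Sum>r\<in>S - {pi0 z}. HH z \<rho> \<delta> r * p r q) \<le> HH z \<rho> \<delta> q"
    using supersol[OF d dx] by auto
  have b: "P \<in> S - {pi0 z}" using P by simp
  note hu = hit_upper[OF fS p_nonneg H0 sup b]
  show "summable (hterm S p (pi0 z) P)" using hu(1) .
  show "arg_hit_prob z \<rho> P \<le> HH z \<rho> \<delta> P" using hu(2) unfolding arg_hit_prob_def .
qed

lemma prod_nth_list: "(\<Prod>i<length t. f (t ! i)) = prod_list (map f t)"
proof (induction t)
  case Nil then show ?case by simp
next
  case (Cons a t)
  have "(\<Prod>i<length (a # t). f ((a # t) ! i)) = f a * (\<Prod>i<length t. f (t ! i))"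
    unfolding length_Cons prod.lessThan_Suc_shift by simp
  then show ?case using Cons by simp
qed

lemma energy_list: "energy s = prod_list (map cover_length (tl s))"
proof (cases s)
  case Nil then show ?thesis unfolding energy_def by simp
next
  case (Cons a t)
  have "energy s = (\<Prod>i\<in>{Suc 0..<Suc (length t)}. cover_length ((a # t) ! i))"
    unfolding energy_def Cons by simp
  also have "\<dots> = (\<Prod>i\<in>{0..<length t}. cover_length ((a # t) ! Suc i))"
    by (rule prod.shift_bounds_Suc_ivl)
  also have "\<dots> = (\<Prod>i<length t. cover_length (t ! i))" by (simp add: atLeast0LessThan)
  also have "\<dots> = prod_list (map cover_length t)" by (rule prod_nth_list)
  finally show ?thesis using Cons by simp
qed

lemma step_lower:
  assumes y: "y \<in> S" "y \<noteq> pi0 z" and m: "is_merge y y2"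
  shows "(min_dist z * \<rho>) / (min_dist z * \<rho> + gam) / (\<rho> * cover_length y) \<le> p y y2"
proof -
  define x where "x = min_dist z * \<rho>"
  have yP: "partition_on z y" using y partitions_of_iff by blast
  have a0: "0 < min_dist z" using min_dist_props(1)[OF z z2] .
  have x0: "0 < x" using a0 rho x_def by simp
  have Cy: "min_dist z \<le> cover_length y" using cover_ge_alpha[OF z yP y(2)] .
  have xC: "x \<le> \<rho> * cover_length y" using Cy rho x_def by simp
  have rc: "0 < \<rho> * cover_length y" using x0 xC by linarith
  have T: "arg_total_rate z \<rho> y \<le> gam + \<rho> * cover_length y" using T_upper[OF y(1)] .
  have Tp: "0 < arg_total_rate z \<rho> y" using T_lower[OF y(1)] rc by linarith
  have "x / (x + gam) / (\<rho> * cover_length y) \<le> 1 / (gam + \<rho> * cover_length y)"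
  proof -
    have "x * (gam + \<rho> * cover_length y) \<le> (x + gam) * (\<rho> * cover_length y)"
      using xC gam_pos by (simp add: algebra_simps mult_left_mono)
    have B: "0 < (x + gam) * (\<rho> * cover_length y)" using x0 gam_pos rc by simp
    have D: "0 < gam + \<rho> * cover_length y" using gam_pos rc by simp
    have "x \<le> ((x + gam) * (\<rho> * cover_length y)) / (gam + \<rho> * cover_length y)"
      by (rule mult_imp_le_div_pos[OF D]) (use \<open>x * (gam + \<rho> * cover_length y) \<le> (x + gam) * (\<rho> * cover_length y)\<close> in simp)
    then have "x / ((x + gam) * (\<rho> * cover_length y)) \<le> 1 / (gam + \<rho> * cover_length y)"
      by (intro mult_imp_div_pos_le[OF B]) simp
    then show ?thesis by (simp add: divide_divide_eq_left)
  qed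
  also have "\<dots> \<le> 1 / arg_total_rate z \<rho> y" using T Tp by (intro divide_left_mono) auto
  also have "\<dots> = p y y2" using jump_merge[OF y(1) m] by simp
  finally show ?thesis unfolding x_def .
qed

lemma path_lower_aux:
  "ys \<noteq> [] \<Longrightarrow> set ys \<subseteq> S - {pi0 z} \<Longrightarrow> (\<forall>i. Suc i < length ys \<longrightarrow> is_merge (ys ! i) (ys ! Suc i)) \<Longrightarrow>
   ((min_dist z * \<rho>) / (min_dist z * \<rho> + gam)) ^ (length ys - 1)
     / (\<rho> ^ (length ys - 1) * prod_list (map cover_length (butlast ys))) \<le> path_prob p ys"
proof (induction ys)
  case Nil then show ?case by simp
next
  case (Cons y ys)
  show ?case
  proof (cases ys)
    case Nil then show ?thesis by simp
  next
    case (Cons y2 rest)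
    define c where "c = (min_dist z * \<rho>) / (min_dist z * \<rho> + gam)"
    have a0: "0 < min_dist z" using min_dist_props(1)[OF z z2] .
    have c0: "0 \<le> c" unfolding c_def using a0 rho gam_pos by simp
    have ys_ne: "ys \<noteq> []" using Cons by simp
    have chain': "\<forall>i. Suc i < length ys \<longrightarrow> is_merge (ys ! i) (ys ! Suc i)"
    proof (intro allI impI)
      fix i assume "Suc i < length ys"
      then have "Suc (Suc i) < length (y # ys)" by simp
      then show "is_merge (ys ! i) (ys ! Suc i)" using Cons.prems(3) by fastforce
    qed
    have IH: "c ^ (length ys - 1) / (\<rho> ^ (length ys - 1) * prod_list (map cover_length (butlast ys))) \<le> path_prob p ys"
      using Cons.IH[OF ys_ne _ chain'] Cons.prems(2) c_def by auto
    have yS: "y \<in> S" "y \<noteq> pi0 z" using Cons.prems(2) by auto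
    have m: "is_merge y y2" using Cons.prems(3) Cons by fastforce
    have st: "c / (\<rho> * cover_length y) \<le> p y y2" using step_lower[OF yS m] c_def by simp
    have yP: "partition_on z y" using yS partitions_of_iff by blast
    have Cy: "0 < cover_length y" using cover_pos[OF z yP yS(2)] .
    have pl0: "0 \<le> prod_list (map cover_length (butlast ys))"
    proof (intro prod_list_nonneg)
      fix v assume "v \<in> set (map cover_length (butlast ys))"
      then obtain w where "w \<in> set ys" "v = cover_length w" by (auto dest: in_set_butlastD)
      then show "0 \<le> v" using Cons.prems(2) cover_nonneg[OF z] partitions_of_iff by auto
    qed
    have l: "length (y # ys) - 1 = Suc (length ys - 1)" using ys_ne by simp
    have bl: "butlast (y # ys) = y # butlast ys" using ys_ne by simp
    have "c ^ (length (y # ys) - 1) / (\<rho> ^ (length (y # ys) - 1) * prod_list (map cover_length (butlast (y # ys))))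
        = (c / (\<rho> * cover_length y)) * (c ^ (length ys - 1) / (\<rho> ^ (length ys - 1) * prod_list (map cover_length (butlast ys))))"
      unfolding l bl by (simp add: field_simps)
    also have "\<dots> \<le> p y y2 * path_prob p ys"
    proof (rule mult_mono[OF st IH])
      show "0 \<le> p y y2" by (rule p_nonneg)
      show "0 \<le> c ^ (length ys - 1) / (\<rho> ^ (length ys - 1) * prod_list (map cover_length (butlast ys)))"
        using c0 rho pl0 by simp
    qed
    also have "\<dots> = path_prob p (y # ys)" using Cons by simp
    finally show ?thesis unfolding c_def .
  qed
qed

lemma scen_path_lower:
  assumes s: "s \<in> scenarios z P" and P: "P \<noteq> pi0 z"
  shows "((min_dist z * \<rho>) / (min_dist z * \<rho> + gam)) ^ (length s - 2) * (cover_length P / (\<rho> ^ (length s - 2) * gam) * (1 / energy s))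
         \<le> path_prob p s"
proof -
  define c where "c = (min_dist z * \<rho>) / (min_dist z * \<rho> + gam)"
  have sp: "s \<noteq> []" "hd s = pi0 z" "last s = P" "\<forall>i. Suc i < length s \<longrightarrow> is_merge (s ! i) (s ! Suc i)"
    using s unfolding scenarios_def by auto
  define ys where "ys = tl s"
  have seq: "s = pi0 z # ys" using sp unfolding ys_def by (cases s) auto
  have ys_ne: "ys \<noteq> []" using seq sp P by auto
  have lys: "length s - 2 = length ys - 1" using seq by simp
  have setys: "set ys \<subseteq> S - {pi0 z}"
  proof
    fix w assume "w \<in> set ys"
    then obtain i where i: "i < length ys" "w = ys ! i" by (auto simp: in_set_conv_nth)
    then have "Suc i < length s" "s ! Suc i = w" using seq by auto
    then have "partition_on z w" "card w + Suc i = card z" using scen_chain[OF z s] by metis+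
    then show "w \<in> S - {pi0 z}" using card_pi0 partitions_of_iff by fastforce
  qed
  have chain: "\<forall>i. Suc i < length ys \<longrightarrow> is_merge (ys ! i) (ys ! Suc i)"
  proof (intro allI impI)
    fix i assume "Suc i < length ys"
    then have "Suc (Suc i) < length s" using seq by simp
    then show "is_merge (ys ! i) (ys ! Suc i)" using sp(4) seq by fastforce
  qed
  have PL: "c ^ (length ys - 1) / (\<rho> ^ (length ys - 1) * prod_list (map cover_length (butlast ys))) \<le> path_prob p ys"
    using path_lower_aux[OF ys_ne setys chain] c_def by simp
  have m0: "is_merge (pi0 z) (hd ys)" using sp(4) seq ys_ne by (cases ys) auto
  have p0: "p (pi0 z) (hd ys) = 1 / gam" using jump_merge[OF pi0_in m0] T_pi0 by simp
  have pp: "path_prob p s = 1 / gam * path_prob p ys"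
    using seq ys_ne p0 by (cases ys) auto
  have lastys: "last ys = P" using sp seq ys_ne by simp
  have en: "energy s = prod_list (map cover_length (butlast ys)) * cover_length P"
  proof -
    have "ys = butlast ys @ [P]" using ys_ne lastys by (metis append_butlast_last_id)
    then have "map cover_length ys = map cover_length (butlast ys) @ [cover_length P]" by (metis map_append list.simps(8,9))
    then show ?thesis unfolding energy_list using seq by simp
  qed
  have PP: "partition_on z P" using scen_chain[OF z s] sp(3) sp(1) last_conv_nth
    by (metis diff_less length_greater_0_conv zero_less_one)
  have CP: "0 < cover_length P" using cover_pos[OF z PP P] .
  have "c ^ (length s - 2) * (cover_length P / (\<rho> ^ (length s - 2) * gam) * (1 / energy s))
      = 1 / gam * (c ^ (length ys - 1) / (\<rho> ^ (length ys - 1) * prod_list (map cover_length (butlast ys))))"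
    unfolding lys en using CP by (simp add: field_simps)
  also have "\<dots> \<le> 1 / gam * path_prob p ys" using PL gam_pos by (intro mult_left_mono) auto
  also have "\<dots> = path_prob p s" using pp by simp
  finally show ?thesis unfolding c_def .
qed

lemma hit_lower_bound:
  assumes P: "P \<in> S" "P \<noteq> pi0 z" and k: "card P + k = card z"
    and sm: "summable (hterm S p (pi0 z) P)"
  shows "((min_dist z * \<rho>) / (min_dist z * \<rho> + gam)) ^ (k - 1) * tt z \<rho> P \<le> arg_hit_prob z \<rho> P"
proof -
  define c where "c = (min_dist z * \<rho>) / (min_dist z * \<rho> + gam)"
  define L where "L = {xs. length xs = k - 1 \<and> set xs \<subseteq> S - {pi0 z, P}}"
  define g where "g s = butlast (tl s)" for s :: "real set set list"
  have k1: "1 \<le> k"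
  proof (rule ccontr)
    assume "\<not> 1 \<le> k"
    then have "card P = card z" using k by simp
    then have "P = pi0 z" using card_eq_pi0[OF z] P(1) partitions_of_iff by blast
    then show False using P(2) by simp
  qed
  have fS: "finite S" using finite_partitions[OF z] .
  have fL: "finite L" unfolding L_def using finite_lists_length_eq[of "S - {pi0 z, P}" "k - 1"] fS
    by (simp add: conj_commute)
  have fsc: "finite (scenarios z P)" using scen_finite[OF z] .
  have ls: "length s = k + 1" if "s \<in> scenarios z P" for s using scen_length[OF z that] k by simp
  have recon: "pi0 z # g s @ [P] = s" if s: "s \<in> scenarios z P" for s
  proof -
    have sp: "s \<noteq> []" "hd s = pi0 z" "last s = P" using s unfolding scenarios_def by auto
    have "length s = k + 1" using ls s by simp
    then have "tl s \<noteq> []" using k1 sp by (cases s) auto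
    moreover have "last (tl s) = P" using sp calculation by (cases s) auto
    ultimately have "tl s = g s @ [P]" unfolding g_def by (metis append_butlast_last_id)
    then show ?thesis using sp by (cases s) auto
  qed
  have inj: "inj_on g (scenarios z P)"
  proof (rule inj_onI)
    fix s s' assume "s \<in> scenarios z P" "s' \<in> scenarios z P" "g s = g s'"
    then show "s = s'" using recon by metis
  qed
  have gL: "g ` scenarios z P \<subseteq> L"
  proof
    fix xs assume "xs \<in> g ` scenarios z P"
    then obtain s where s: "s \<in> scenarios z P" "xs = g s" by blast
    have len: "length s = k + 1" using ls s by simp
    have lx: "length xs = k - 1" using len s unfolding g_def by simp
    have "set xs \<subseteq> S - {pi0 z, P}"
    proof
      fix w assume "w \<in> set xs"
      then obtain i where i: "i < length xs" "w = xs ! i" by (auto simp: in_set_conv_nth)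
      have "w = s ! Suc i" using i s len unfolding g_def by (cases s) (auto simp: nth_butlast)
      moreover have "Suc i < length s" using i lx len by simp
      ultimately have "partition_on z w" "card w + Suc i = card z" using scen_chain[OF z s(1)] by metis+
      moreover have "Suc i < k" using i lx k1 by simp
      ultimately show "w \<in> S - {pi0 z, P}" using card_pi0 partitions_of_iff k by fastforce
    qed
    then show "xs \<in> L" unfolding L_def using lx by simp
  qed
  have "(\<Sum>s\<in>scenarios z P. c ^ (k - 1) * (cover_length P / (\<rho> ^ (k - 1) * gam) * (1 / energy s)))
        \<le> (\<Sum>s\<in>scenarios z P. path_prob p s)"
  proof (rule sum_mono)
    fix s assume s: "s \<in> scenarios z P"
    have "length s - 2 = k - 1" using ls s by simp
    then show "c ^ (k - 1) * (cover_length P / (\<rho> ^ (k - 1) * gam) * (1 / energy s)) \<le> path_prob p s"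
      using scen_path_lower[OF s P(2)] c_def by simp
  qed
  also have "\<dots> = (\<Sum>s\<in>scenarios z P. path_prob p (pi0 z # g s @ [P]))"
    using recon by simp
  also have "\<dots> = (\<Sum>xs\<in>g ` scenarios z P. path_prob p (pi0 z # xs @ [P]))"
    by (simp add: sum.reindex[OF inj])
  also have "\<dots> \<le> (\<Sum>xs\<in>L. path_prob p (pi0 z # xs @ [P]))"
    using fL gL path_prob_nonneg p_nonneg by (intro sum_mono2) auto
  also have "\<dots> = hterm S p (pi0 z) P (k - 1)" unfolding hterm_def L_def ..
  also have "\<dots> \<le> arg_hit_prob z \<rho> P" using hit_lower[OF sm p_nonneg] unfolding arg_hit_prob_def .
  finally have A: "(\<Sum>s\<in>scenarios z P. c ^ (k - 1) * (cover_length P / (\<rho> ^ (k - 1) * gam) * (1 / energy s)))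
      \<le> arg_hit_prob z \<rho> P" .
  have "(\<Sum>s\<in>scenarios z P. c ^ (k - 1) * (cover_length P / (\<rho> ^ (k - 1) * gam) * (1 / energy s)))
      = c ^ (k - 1) * (cover_length P / (\<rho> ^ (k - 1) * gam) * F_fun z P)"
    unfolding F_fun_def by (simp add: sum_distrib_left)
  also have "\<dots> = c ^ (k - 1) * tt z \<rho> P"
  proof -
    have "card z - card P - 1 = k - 1" using k by simp
    then show ?thesis unfolding tt_def by simp
  qed
  finally show ?thesis using A c_def by simp
qed

end

lemma card_partitions_bound:
  assumes "finite z"
  shows "card (partitions_of z) \<le> 2 ^ (2 ^ card z)"
proof -
  have "partitions_of z \<subseteq> Pow (Pow z)" unfolding partitions_of_def partition_on_def by auto
  then have "card (partitions_of z) \<le> card (Pow (Pow z))"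
    using assms by (intro card_mono) auto
  also have "\<dots> = 2 ^ (2 ^ card z)" using assms by (simp add: card_Pow)
  finally show ?thesis .
qed

definition DD :: "nat \<Rightarrow> real" where
  "DD n = 4 * 2 ^ (2 ^ (n + 1)) * KS (n + 1)"

definition ff :: "nat \<Rightarrow> real \<Rightarrow> real" where
  "ff n x = ((1 + DD n / x) ^ n - 1) + (1 - (x / (x + gamma0 n)) ^ n)"

lemma DD_pos: "0 < DD n"
proof -
  have "1 \<le> KU (n + 1)" by (rule KU_ge1)
  then have "0 < KU (n + 1) ^ (n + 1)" by simp
  moreover have "0 < real (n + 1) ^ (n + 1)" by simp
  ultimately have "0 < KS (n + 1)" unfolding KS_def by simp
  then show ?thesis unfolding DD_def by simp
qed

lemma ff_tendsto: "(ff n \<longlongrightarrow> 0) at_top"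
proof -
  have inf: "filterlim (\<lambda>x::real. x) at_infinity at_top"
    by (rule filterlim_at_top_imp_at_infinity[OF filterlim_ident])
  have d0: "((\<lambda>x::real. DD n / x) \<longlongrightarrow> 0) at_top"
    by (rule tendsto_divide_0[OF tendsto_const inf])
  have g0: "((\<lambda>x::real. gamma0 n / x) \<longlongrightarrow> 0) at_top"
    by (rule tendsto_divide_0[OF tendsto_const inf])
  have t1: "((\<lambda>x. (1 + DD n / x) ^ n - 1) \<longlongrightarrow> (1 + 0) ^ n - 1) at_top"
    by (intro tendsto_intros d0)
  have t2: "((\<lambda>x. 1 - (1 / (1 + gamma0 n / x)) ^ n) \<longlongrightarrow> 1 - (1 / (1 + 0)) ^ n) at_top"
    by (intro tendsto_intros g0) simp
  have ev: "\<forall>\<^sub>F x in at_top. 1 - (1 / (1 + gamma0 n / x)) ^ n = 1 - (x / (x + gamma0 n)) ^ n"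
  proof (rule eventually_mono[OF eventually_gt_at_top[of 0]])
    fix x :: real assume "0 < x"
    then have "1 / (1 + gamma0 n / x) = x / (x + gamma0 n)" by (simp add: field_simps)
    then show "1 - (1 / (1 + gamma0 n / x)) ^ n = 1 - (x / (x + gamma0 n)) ^ n" by simp
  qed
  have t2': "((\<lambda>x. 1 - (x / (x + gamma0 n)) ^ n) \<longlongrightarrow> 0) at_top"
    using tendsto_cong[OF ev] t2 by simp
  have "((\<lambda>x. ((1 + DD n / x) ^ n - 1) + (1 - (x / (x + gamma0 n)) ^ n)) \<longlongrightarrow> 0 + 0) at_top"
    using t1 t2' by (intro tendsto_add) auto
  then show ?thesis unfolding ff_def[abs_def] by simp
qed

theorem proposition4:
  fixes n :: nat
  shows "\<exists>u :: real \<Rightarrow> ennreal. (u \<longlongrightarrow> 0) at_top \<and>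
    (\<forall>(z :: real set) (\<rho> :: real) (k :: nat) P.
       finite z \<and> card z = n + 1 \<and> \<rho> > 0 \<and> 1 \<le> k \<and> k \<le> n \<and> P \<in> partitions_r z k \<longrightarrow>
       ennreal \<bar>arg_hit_prob z \<rho> P -
                 cover_length P / (\<rho> ^ (k - 1) * gamma0 n) * F_fun z P\<bar>
         \<le> u (min_dist z * \<rho>) * ennreal (cover_length P / (\<rho> ^ (k - 1) * gamma0 n) * F_fun z P))"
proof -
  define u where "u x = (if DD n \<le> x then ennreal (ff n x) else top)" for x
  have lim: "(u \<longlongrightarrow> 0) at_top"
  proof -
    have ev: "\<forall>\<^sub>F x in at_top. ennreal (ff n x) = u x"
      using eventually_ge_at_top[of "DD n"] by eventually_elim (simp add: u_def)
    have "((\<lambda>x. ennreal (ff n x)) \<longlongrightarrow> ennreal 0) at_top"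
      using ff_tendsto by (intro tendsto_ennrealI)
    then show ?thesis using tendsto_cong[OF ev] by simp
  qed
  have main: "ennreal \<bar>arg_hit_prob z \<rho> P - cover_length P / (\<rho> ^ (k - 1) * gamma0 n) * F_fun z P\<bar>
         \<le> u (min_dist z * \<rho>) * ennreal (cover_length P / (\<rho> ^ (k - 1) * gamma0 n) * F_fun z P)"
    if a: "finite z" "card z = n + 1" "\<rho> > 0" "1 \<le> k" "k \<le> n" "P \<in> partitions_r z k" for z \<rho> k P
  proof -
    have z: "finite z" and rho: "0 < \<rho>" using a by auto
    have z2: "2 \<le> card z" using a by simp
    have PS: "P \<in> partitions_of z" and Pk: "card P + k = card z" using a(6) unfolding partitions_r_def by auto
    have PP: "partition_on z P" using PS partitions_of_iff by blast
    have Pne: "P \<noteq> pi0 z"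
    proof
      assume "P = pi0 z"
      then have "card P = card z" using card_pi0 by simp
      then show False using Pk a(4) by simp
    qed
    have gn: "gamma0 (card z - 1) = gamma0 n" using a(2) by simp
    have tteq: "cover_length P / (\<rho> ^ (k - 1) * gamma0 n) * F_fun z P = tt z \<rho> P"
    proof -
      have "card z - card P - 1 = k - 1" using Pk by simp
      then show ?thesis unfolding tt_def gn by simp
    qed
    have tpos: "0 < tt z \<rho> P" using tt_pos[OF z rho z2 PS Pne] .
    define x where "x = min_dist z * \<rho>"
    have a0: "0 < min_dist z" using min_dist_props(1)[OF z z2] .
    have x0: "0 < x" using a0 rho x_def by simp
    show ?thesis
    proof (cases "DD n \<le> x")
      case False
      then have "u x = top" unfolding u_def by simp
      then have "u x * ennreal (tt z \<rho> P) = top" using tpos by simp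
      then show ?thesis unfolding tteq x_def[symmetric] by simp
    next
      case True
      define \<delta> where "\<delta> = DD n / x"
      have d: "0 < \<delta>" "\<delta> \<le> 1" using True DD_pos x0 unfolding \<delta>_def by (auto simp: divide_le_eq_1)
      have dx: "4 * real (card (partitions_of z)) * KS (card z) \<le> \<delta> * (min_dist z * \<rho>)"
      proof -
        have "card (partitions_of z) \<le> 2 ^ (2 ^ (n + 1))" using card_partitions_bound[OF z] a(2) by simp
        then have "real (card (partitions_of z)) \<le> 2 ^ (2 ^ (n + 1))"
          by (metis of_nat_le_iff of_nat_numeral of_nat_power)
        then have "4 * real (card (partitions_of z)) * KS (n + 1) \<le> 4 * 2 ^ (2 ^ (n + 1)) * KS (n + 1)"
          using KS_nonneg[of "n + 1"] by (intro mult_right_mono) auto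
        then have "4 * real (card (partitions_of z)) * KS (card z) \<le> 4 * 2 ^ (2 ^ (n + 1)) * KS (n + 1)"
          using a(2) by simp
        also have "\<dots> = \<delta> * (min_dist z * \<rho>)"
        proof -
          have "\<delta> * (min_dist z * \<rho>) = DD n" unfolding \<delta>_def x_def[symmetric] using x0 by simp
          then show ?thesis unfolding DD_def by simp
        qed
        finally show ?thesis .
      qed
      note up = hit_upper_bound[OF z rho z2 d dx PS Pne]
      note lo = hit_lower_bound[OF z rho z2 PS Pne Pk up(2)]
      define h where "h = arg_hit_prob z \<rho> P"
      define t where "t = tt z \<rho> P"
      define c where "c = x / (x + gamma0 n)"
      have c01: "0 \<le> c" "c \<le> 1" unfolding c_def using x0 gam_pos[OF z rho z2] gn by auto
      have up': "h \<le> (1 + \<delta>) ^ n * t"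
      proof -
        have "h \<le> (1 + \<delta>) ^ (card z - card P) * t" using up(1) unfolding HH_def h_def t_def .
        also have "\<dots> \<le> (1 + \<delta>) ^ n * t"
          using Pk a(5) d tpos t_def by (intro mult_right_mono power_increasing) auto
        finally show ?thesis .
      qed
      have lo': "c ^ n * t \<le> h"
      proof -
        have "c ^ n * t \<le> c ^ (k - 1) * t"
          using c01 a(5) tpos t_def by (intro mult_right_mono power_decreasing) auto
        also have "\<dots> \<le> h" using lo unfolding c_def x_def h_def t_def gn by simp
        finally show ?thesis .
      qed
      have f_eq: "ff n x = ((1 + \<delta>) ^ n - 1) + (1 - c ^ n)" unfolding ff_def \<delta>_def c_def ..
      have f1: "0 \<le> (1 + \<delta>) ^ n - 1" using d by simp
      have f2: "0 \<le> 1 - c ^ n" using c01 by (simp add: power_le_one)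
      have abs: "\<bar>h - t\<bar> \<le> ff n x * t"
      proof -
        have "h - t \<le> ((1 + \<delta>) ^ n - 1) * t" using up' by (simp add: algebra_simps)
        also have "\<dots> \<le> ff n x * t" using f_eq f2 tpos t_def by (intro mult_right_mono) auto
        finally have A: "h - t \<le> ff n x * t" .
        have "t - h \<le> (1 - c ^ n) * t" using lo' by (simp add: algebra_simps)
        also have "\<dots> \<le> ff n x * t" using f_eq f1 tpos t_def by (intro mult_right_mono) auto
        finally have B: "t - h \<le> ff n x * t" .
        show ?thesis using A B by linarith
      qed
      have "ennreal \<bar>h - t\<bar> \<le> ennreal (ff n x * t)" using abs by (rule ennreal_leI)
      also have "\<dots> = ennreal (ff n x) * ennreal t"
        using f1 f2 f_eq tpos t_def by (intro ennreal_mult) auto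
      also have "\<dots> = u x * ennreal t" unfolding u_def using True by simp
      finally show ?thesis unfolding tteq h_def t_def x_def by simp
    qed
  qed
  show ?thesis using lim main by blast
qed

end
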